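(* Let $C_8$ be the configuration with lines $l_0,\dots,l_7$ and points $p_{012},p_{034},p_{056},p_{07},p_{135},p_{147},p_{16},p_{23},p_{246},p_{257},p_{367},p_{45}$, where $p_{ijk}$ is incident exactly to $l_i,l_j,l_k$ and $p_{ij}$ exactly to $l_i,l_j$. Let $\mathcal{P}_0$ be the set of its points not incident to $l_0$, $\mathcal{A}=\{(i,p)\in\{1,\dots,7\}\times\mathcal{P}_0:p\prec l_i\}$. Let $L=\bigoplus_k L_k$ be the free Lie algebra over $\mathbb{Z}$ on $x_1,\dots,x_7$, $H=L_1$, $S_p=\sum_{j:\,p\prec l_j}x_j$, $R_2\subset L_2$ the subgroup with $\mathbb{Z}$-basis $\bar r(i,p)=[x_i,S_p]$ for $(i,p)\in\mathcal{A}$, $i\ne\min\{j:l_j\succ p\}$, $R_3=[H,R_2]$, $P_3=L_3/R_3$, $A=H^{\mathcal{A}}$, and $\tilde\tau:A\to\mathrm{Hom}(R_2,P_3)$ defined by $\tilde\tau a(\bar r(i,p))=[[x_i,a(i,p)],S_p]+[x_i,\sum_{j:\,p\prec l_j}[x_j,a(j,p)]]+R_3$. Let $U\subseteq A$ be the subgroup generated by $a^{(0)}_{i,p}$ ($(i,p)\in\mathcal{A}$), $a^{(0)}_{i,p}(j,q)=\delta_{i,j}\delta_{p,q}x_i$; $a^{(1)}_{i,p}$ ($1\le i\le7$, $p\in\mathcal{P}_0$), $a^{(1)}_{i,p}(j,q)=\delta_{p,q}x_i$; and $a^{(2)}_{i,p_1,p_2}$ ($1\le i\le 7$, $p_1,p_2\in\mathcal{P}_0$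 incident to $l_i$), $a^{(2)}_{i,p_1,p_2}(j,q)=\delta_{i,j}\delta_{p_1,q}S_{p_2}$. Then $U=\ker\tilde\tau$.
   Context: Incidence of a point $p$ and line $l$ is written $p\prec l$ or $l\succ p$. The elements $\bar r(i,p)$ listed are linearly independent in $L_2$, so $\tilde\tau$ is well defined by its values on them. *)

theory Defs
  imports Main "HOL-Library.Function_Algebras"
begin

text \<open>Free associative ring Z<x_1..x_7>: elements are functions from words
 (lists of letter indices) to their integer coefficient. Addition etc. are pointwise
 (Function_Algebras); the (noncommutative) product is concatenation convolution.
 The free Lie ring L over Z on x_1..x_7 is realised (Magnus/Witt) as the Lie subring
 generated by the x_i, graded by bracket length.\<close>

type_synonym ncpoly = "nat list \<Rightarrow> int"

definition ncmult :: "ncpoly \<Rightarrow> ncpoly \<Rightarrow> ncpoly" where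
  "ncmult p q = (\<lambda>w. \<Sum>k\<in>{0..length w}. p (take k w) * q (drop k w))"

definition lbr :: "ncpoly \<Rightarrow> ncpoly \<Rightarrow> ncpoly" where
  "lbr p q = ncmult p q - ncmult q p"

definition gen :: "nat \<Rightarrow> ncpoly" where
  "gen i = (\<lambda>w. if w = [i] then 1 else 0)"

inductive LieDeg :: "nat \<Rightarrow> ncpoly \<Rightarrow> bool" where
  zero: "LieDeg k 0"
| gen: "i \<in> {1..7} \<Longrightarrow> LieDeg 1 (gen i)"
| diff: "LieDeg k a \<Longrightarrow> LieDeg k b \<Longrightarrow> LieDeg k (a - b)"
| br: "LieDeg m a \<Longrightarrow> LieDeg n b \<Longrightarrow> LieDeg (m + n) (lbr a b)"

inductive_set zspan :: "'a::ab_group_add set \<Rightarrow> 'a set" for S where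
  zero: "0 \<in> zspan S"
| base: "s \<in> S \<Longrightarrow> s \<in> zspan S"
| diff: "a \<in> zspan S \<Longrightarrow> b \<in> zspan S \<Longrightarrow> a - b \<in> zspan S"

text \<open>Configuration C_8: a point is identified with the set of indices of the lines
 it is incident to; p \<prec> l_i iff i \<in> p.\<close>
definition C8_points :: "nat set set" where
  "C8_points = {{0,1,2},{0,3,4},{0,5,6},{0,7},{1,3,5},{1,4,7},{1,6},{2,3},
                {2,4,6},{2,5,7},{3,6,7},{4,5}}"

definition P0 :: "nat set set" where
  "P0 = {p \<in> C8_points. 0 \<notin> p}"

definition Aidx :: "(nat \<times> nat set) set" where
  "Aidx = {(i, p). i \<in> {1..7} \<and> p \<in> P0 \<and> i \<in> p}"

definition S :: "nat set \<Rightarrow> ncpoly" where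
  "S p = (\<Sum>j\<in>p. gen j)"

definition Bidx :: "(nat \<times> nat set) set" where
  "Bidx = {(i, p) \<in> Aidx. i \<noteq> Min p}"

definition rbar :: "nat \<Rightarrow> nat set \<Rightarrow> ncpoly" where
  "rbar i p = lbr (gen i) (S p)"

definition R2 :: "ncpoly set" where
  "R2 = zspan {rbar i p | i p. (i, p) \<in> Bidx}"

definition R3 :: "ncpoly set" where
  "R3 = zspan {lbr h r | h r. LieDeg 1 h \<and> r \<in> R2}"

definition Agrp :: "(nat \<times> nat set \<Rightarrow> ncpoly) set" where
  "Agrp = {a. (\<forall>ip\<in>Aidx. LieDeg 1 (a ip)) \<and> (\<forall>ip. ip \<notin> Aidx \<longrightarrow> a ip = 0)}"

text \<open>Representative in L_3 of tau~ a (rbar(i,p)).\<close>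
definition tau_val :: "(nat \<times> nat set \<Rightarrow> ncpoly) \<Rightarrow> nat \<Rightarrow> nat set \<Rightarrow> ncpoly" where
  "tau_val a i p = lbr (lbr (gen i) (a (i, p))) (S p)
                   + lbr (gen i) (\<Sum>j\<in>p. lbr (gen j) (a (j, p)))"

text \<open>Kernel of tau~ : A \<rightarrow> Hom(R_2, P_3). Since tau~ a is defined by its values on the
 Z-basis rbar(i,p) of R_2, tau~ a = 0 iff every value vanishes in P_3 = L_3/R_3.\<close>
definition ker_tau :: "(nat \<times> nat set \<Rightarrow> ncpoly) set" where
  "ker_tau = {a \<in> Agrp. \<forall>(i, p)\<in>Bidx. tau_val a i p \<in> R3}"

definition a0 :: "nat \<Rightarrow> nat set \<Rightarrow> nat \<times> nat set \<Rightarrow> ncpoly" where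
  "a0 i p = (\<lambda>(j, q). if (j, q) \<in> Aidx \<and> j = i \<and> q = p then gen i else 0)"

definition a1 :: "nat \<Rightarrow> nat set \<Rightarrow> nat \<times> nat set \<Rightarrow> ncpoly" where
  "a1 i p = (\<lambda>(j, q). if (j, q) \<in> Aidx \<and> q = p then gen i else 0)"

definition a2 :: "nat \<Rightarrow> nat set \<Rightarrow> nat set \<Rightarrow> nat \<times> nat set \<Rightarrow> ncpoly" where
  "a2 i p1 p2 = (\<lambda>(j, q). if (j, q) \<in> Aidx \<and> j = i \<and> q = p1 then S p2 else 0)"

definition U :: "(nat \<times> nat set \<Rightarrow> ncpoly) set" where
  "U = zspan ({a0 i p | i p. (i, p) \<in> Aidx}
            \<union> {a1 i p | i p. i \<in> {1..7} \<and> p \<in> P0}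
            \<union> {a2 i p1 p2 | i p1 p2. i \<in> {1..7} \<and> p1 \<in> P0 \<and> p2 \<in> P0 \<and> i \<in> p1 \<and> i \<in> p2})"

end

theory Submission
  imports Defs
begin


lemma sum_fun_apply: "(sum f A) x = sum (\<lambda>a. f a x) A"
  by (induction A rule: infinite_finite_induct) auto

lemma ncm0: "ncmult p q [] = p [] * q []"
  by (simp add: ncmult_def)
lemma ncm1: "ncmult p q [a] = p [] * q [a] + p [a] * q []"
  by (simp add: ncmult_def)
lemma ncm2: "ncmult p q [a,b] = p [] * q [a,b] + p [a] * q [b] + p [a,b] * q []"
  by (simp add: ncmult_def numeral_eq_Suc atLeast0_atMost_Suc)
lemma ncm3: "ncmult p q [a,b,c] = p [] * q [a,b,c] + p [a] * q [b,c] + p [a,b] * q [c] + p [a,b,c] * q []"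
  by (simp add: ncmult_def numeral_eq_Suc atLeast0_atMost_Suc)

lemma gen_Nil[simp]: "gen i [] = 0" and gen_one[simp]: "gen i [a] = (if a = i then 1 else 0)"
  and gen_long[simp]: "gen i (a#b#w) = 0"
  by (auto simp: gen_def)

lemma S_Nil[simp]: "S q [] = 0" and S_long[simp]: "S q (a#b#w) = 0"
  by (simp_all add: S_def sum_fun_apply)
lemma S_one[simp]: "finite q \<Longrightarrow> S q [a] = (if a \<in> q then 1 else 0)"
  by (simp add: S_def sum_fun_apply)

lemma ncmult_diff_left: "ncmult (p - q) r = ncmult p r - ncmult q r"
  by (rule ext) (simp add: ncmult_def algebra_simps sum_subtractf)
lemma ncmult_diff_right: "ncmult r (p - q) = ncmult r p - ncmult r q"
  by (rule ext) (simp add: ncmult_def algebra_simps sum_subtractf)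
lemma ncmult_add_left: "ncmult (p + q) r = ncmult p r + ncmult q r"
  by (rule ext) (simp add: ncmult_def algebra_simps sum.distrib)
lemma ncmult_add_right: "ncmult r (p + q) = ncmult r p + ncmult r q"
  by (rule ext) (simp add: ncmult_def algebra_simps sum.distrib)
lemma ncmult_zero_left[simp]: "ncmult 0 r = 0"
  by (rule ext) (simp add: ncmult_def)
lemma ncmult_zero_right[simp]: "ncmult r 0 = 0"
  by (rule ext) (simp add: ncmult_def)
lemma ncmult_sum_left: "ncmult (sum f A) r = (\<Sum>a\<in>A. ncmult (f a) r)"
proof (induction A rule: infinite_finite_induct)
  case (insert x F) then show ?case by (simp only: sum.insert[OF insert(1,2)] ncmult_add_left insert(3))
qed (simp_all add: ncmult_def)
lemma ncmult_sum_right: "ncmult r (sum f A) = (\<Sum>a\<in>A. ncmult r (f a))"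
proof (induction A rule: infinite_finite_induct)
  case (insert x F) then show ?case by (simp only: sum.insert[OF insert(1,2)] ncmult_add_right insert(3))
qed (simp_all add: ncmult_def)

lemma lbr_diff_left: "lbr (p - q) r = lbr p r - lbr q r"
  by (simp add: lbr_def ncmult_diff_left ncmult_diff_right)
lemma lbr_diff_right: "lbr r (p - q) = lbr r p - lbr r q"
  by (simp add: lbr_def ncmult_diff_left ncmult_diff_right)
lemma lbr_add_left: "lbr (p + q) r = lbr p r + lbr q r"
  by (simp add: lbr_def ncmult_add_left ncmult_add_right)
lemma lbr_add_right: "lbr r (p + q) = lbr r p + lbr r q"
  by (simp add: lbr_def ncmult_add_left ncmult_add_right)
lemma lbr_zero_left[simp]: "lbr 0 r = 0" and lbr_zero_right[simp]: "lbr r 0 = 0"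
  by (simp_all add: lbr_def)
lemma lbr_self[simp]: "lbr r r = 0"
  by (simp add: lbr_def)
lemma lbr_anti: "lbr p q = - lbr q p"
  by (simp add: lbr_def)
lemma lbr_sum_left: "lbr (sum f A) r = (\<Sum>a\<in>A. lbr (f a) r)"
  by (simp add: lbr_def ncmult_sum_left ncmult_sum_right sum_subtractf)
lemma lbr_sum_right: "lbr r (sum f A) = (\<Sum>a\<in>A. lbr r (f a))"
  by (simp add: lbr_def ncmult_sum_left ncmult_sum_right sum_subtractf)
lemma lbr_uminus_left: "lbr (- p) r = - lbr p r"
  using lbr_diff_left[of 0 p r] by simp
lemma lbr_uminus_right: "lbr r (- p) = - lbr r p"
  using lbr_diff_right[of r 0 p] by simp

lemma ncmult_nz: "ncmult p q w \<noteq> 0 \<Longrightarrow> \<exists>k. p (take k w) \<noteq> 0 \<and> q (drop k w) \<noteq> 0"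
  unfolding ncmult_def by (metis (no_types, lifting) mult_eq_0_iff sum.neutral)

lemma LieDeg_supp: "LieDeg k a \<Longrightarrow> a w \<noteq> 0 \<Longrightarrow> length w = k \<and> set w \<subseteq> {1..7}"
proof (induction k a arbitrary: w rule: LieDeg.induct)
  case (br m a n b)
  from br.prems have "ncmult a b w \<noteq> 0 \<or> ncmult b a w \<noteq> 0" by (auto simp: lbr_def)
  then show ?case
  proof
    assume "ncmult a b w \<noteq> 0"
    then obtain k where "a (take k w) \<noteq> 0" "b (drop k w) \<noteq> 0" using ncmult_nz by blast
    with br.IH have "length (take k w) = m \<and> set (take k w) \<subseteq> {1..7}"
      "length (drop k w) = n \<and> set (drop k w) \<subseteq> {1..7}" by blast+
    then show ?thesis by (metis Un_subset_iff append_take_drop_id length_append set_append)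
  next
    assume "ncmult b a w \<noteq> 0"
    then obtain k where "b (take k w) \<noteq> 0" "a (drop k w) \<noteq> 0" using ncmult_nz by blast
    with br.IH have "length (take k w) = n \<and> set (take k w) \<subseteq> {1..7}"
      "length (drop k w) = m \<and> set (drop k w) \<subseteq> {1..7}" by blast+
    then show ?thesis by (metis Un_subset_iff add.commute append_take_drop_id length_append set_append)
  qed
next
  case (diff k a b)
  then show ?case by (metis diff_zero minus_apply)
qed (auto simp: gen_def split: if_splits)

definition sup1 :: "ncpoly \<Rightarrow> bool" where
  "sup1 f \<longleftrightarrow> (\<forall>w. f w \<noteq> 0 \<longrightarrow> (\<exists>m\<in>{1..7}. w = [m]))"

lemma LieDeg1_sup1: "LieDeg 1 f \<Longrightarrow> sup1 f"
  unfolding sup1_def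
proof (intro allI impI)
  fix w assume "LieDeg 1 f" "f w \<noteq> 0"
  from LieDeg_supp[OF this] obtain m where "w = [m]" "m \<in> {1..7}"
    by (cases w) auto
  then show "\<exists>m\<in>{1..7}. w = [m]" by blast
qed

lemma sup1_vals: assumes "sup1 f" shows "f [] = 0" "f (a#b#w) = 0"
  using assms unfolding sup1_def by auto


lemma Collect_insert_filter: "{x \<in> insert a A. P x} = (if P a then {a} else {}) \<union> {x\<in>A. P x}"
  by auto
lemma P0_eq: "P0 = {{1,3,5},{1,4,7},{1,6},{2,3},{2,4,6},{2,5,7},{3,6,7},{4,5}}"
  unfolding P0_def C8_points_def apply (simp only: Collect_insert_filter)
  apply (simp only: insert_iff empty_iff zero_neq_one zero_neq_numeral simp_thms if_True if_False Un_insert_left Un_empty_left Collect_empty_eq)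
  by simp
lemma P0_cases: "p \<in> P0 \<Longrightarrow> p = {1,3,5} \<or> p = {1,4,7} \<or> p = {1,6} \<or> p = {2,3} \<or> p = {2,4,6} \<or> p = {2,5,7} \<or> p = {3,6,7} \<or> p = {4,5}"
  unfolding P0_eq by (simp only: insert_iff empty_iff simp_thms)
lemma P0_sub: "p \<in> P0 \<Longrightarrow> p \<subseteq> {1..7}"
  by (drule P0_cases) (elim disjE; simp)
lemma P0_fin: "p \<in> P0 \<Longrightarrow> finite p"
  by (drule P0_cases) (elim disjE; simp)
lemma Bidx_all: assumes "P 3 {1,3,5}" "P 5 {1,3,5}" "P 4 {1,4,7}" "P 7 {1,4,7}"
  "P 6 {1,6}" "P 3 {2,3}" "P 4 {2,4,6}" "P 6 {2,4,6}"
  "P 5 {2,5,7}" "P 7 {2,5,7}" "P 6 {3,6,7}" "P 7 {3,6,7}" "P 5 {4,5}"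
  shows "(k,q) \<in> Bidx \<Longrightarrow> P k q"
proof -
  assume "(k,q) \<in> Bidx"
  then have q: "q \<in> P0" and k: "k \<in> q" "k \<noteq> Min q" unfolding Bidx_def Aidx_def by auto
  from P0_cases[OF q] show ?thesis
    apply (elim disjE)
    using k assms by auto
qed


lemma zspan_uminus: "x \<in> zspan A \<Longrightarrow> - x \<in> zspan A"
  using zspan.diff[OF zspan.zero] by (metis diff_0)
lemma zspan_add: "x \<in> zspan A \<Longrightarrow> y \<in> zspan A \<Longrightarrow> x + y \<in> zspan A"
  using zspan.diff[OF _ zspan_uminus] by (metis diff_minus_eq_add)
lemma zspan_sum: "finite I \<Longrightarrow> (\<And>i. i \<in> I \<Longrightarrow> f i \<in> zspan A) \<Longrightarrow> sum f I \<in> zspan A"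
  by (induction I rule: finite_induct) (auto intro: zspan_add zspan.zero)

definition zsc :: "int \<Rightarrow> (nat \<times> nat set \<Rightarrow> ncpoly) \<Rightarrow> (nat \<times> nat set \<Rightarrow> ncpoly)" where
  "zsc n F = (\<lambda>ip w. n * F ip w)"

lemma zsc_apply: "zsc n F ip w = n * F ip w"
  by (simp add: zsc_def)

lemma zspan_zsc: assumes "x \<in> zspan A" shows "zsc n x \<in> zspan A"
proof (induction n rule: int_induct[where k=0])
  case base
  have "zsc 0 x = 0" by (simp add: zsc_def fun_eq_iff)
  then show ?case using zspan.zero by metis
next
  case (step1 i)
  have "zsc (i+1) x = zsc i x + x" by (simp add: zsc_def fun_eq_iff algebra_simps)
  then show ?case using step1 assms zspan_add by metis
next
  case (step2 i)
  have "zsc (i-1) x = zsc i x - x" by (simp add: zsc_def fun_eq_iff algebra_simps)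
  then show ?case using step2 assms zspan.diff by metis
qed

lemma LieDeg_add: "LieDeg k a \<Longrightarrow> LieDeg k b \<Longrightarrow> LieDeg k (a + b)"
  using LieDeg.diff[of k a "0 - b"] LieDeg.diff[OF LieDeg.zero, of k b] by simp

lemma LieDeg_S: assumes "q \<subseteq> {1..7}" "finite q" shows "LieDeg 1 (S q)"
  using assms(2,1) unfolding S_def
proof (induction q rule: finite_induct)
  case empty then show ?case by (simp only: sum.empty) (rule LieDeg.zero)
next
  case (insert x F)
  have "LieDeg 1 (gen x)" using insert(4) by (intro LieDeg.gen) auto
  moreover have "LieDeg 1 (sum gen F)" using insert by auto
  ultimately have "LieDeg 1 (gen x + sum gen F)" by (rule LieDeg_add)
  then show ?case by (subst sum.insert[OF insert(1,2)])
qed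

lemma Aidx_I: "p \<in> P0 \<Longrightarrow> i \<in> p \<Longrightarrow> (i,p) \<in> Aidx"
  unfolding Aidx_def using P0_sub[of p] by auto

lemma Aidx_D: "(i,p) \<in> Aidx \<Longrightarrow> p \<in> P0 \<and> i \<in> p \<and> i \<in> {1..7}"
  unfolding Aidx_def by auto

lemma sup1_gen: "i \<in> {1..7} \<Longrightarrow> sup1 (gen i)"
  unfolding sup1_def gen_def by auto

lemma sup1_S: "q \<subseteq> {1..7} \<Longrightarrow> finite q \<Longrightarrow> sup1 (S q)"
  by (rule LieDeg1_sup1[OF LieDeg_S])

lemma sup1_zero: "sup1 0"
  unfolding sup1_def by simp

lemma sup1_add: "sup1 f \<Longrightarrow> sup1 g \<Longrightarrow> sup1 (f + g)"
  unfolding sup1_def by (metis add.right_neutral plus_fun_apply)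

lemma sup1_mult: "sup1 f \<Longrightarrow> sup1 (\<lambda>w. n * f w)"
  unfolding sup1_def by auto

definition blk :: "nat set \<Rightarrow> (nat \<times> nat set \<Rightarrow> ncpoly) \<Rightarrow> (nat \<times> nat set \<Rightarrow> ncpoly)" where
  "blk p a = (\<lambda>(j,q). if q = p then a (j,q) else 0)"

lemma Agrp_sup1: assumes "a \<in> Agrp" shows "sup1 (a ip)"
proof (cases "ip \<in> Aidx")
  case True then show ?thesis using assms LieDeg1_sup1 unfolding Agrp_def by blast
next
  case False then have "a ip = 0" using assms unfolding Agrp_def by blast
  then show ?thesis by (simp only: sup1_zero)
qed

lemma blk_sum: assumes "a \<in> Agrp" shows "a = (\<Sum>p\<in>P0. blk p a)"
proof (rule ext)
  fix ip :: "nat \<times> nat set"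
  obtain j q where ip: "ip = (j,q)" by force
  have fin: "finite P0" unfolding P0_eq by simp
  have "(\<Sum>p\<in>P0. blk p a) ip = (\<Sum>p\<in>P0. if q = p then a (j,q) else 0)"
    unfolding sum_fun_apply ip blk_def by simp
  also have "\<dots> = (if q \<in> P0 then a (j,q) else 0)"
    using fin by (simp add: sum.delta)
  also have "\<dots> = a ip"
    using assms ip unfolding Agrp_def Aidx_def by auto
  finally show "a ip = (\<Sum>p\<in>P0. blk p a) ip" by simp
qed

definition blkgen :: "nat set \<Rightarrow> (nat \<times> nat set \<Rightarrow> ncpoly) \<Rightarrow> bool" where
  "blkgen p F \<longleftrightarrow> (\<forall>j q. (q \<noteq> p \<or> (j,q) \<notin> Aidx) \<longrightarrow> F (j,q) = 0) \<and> (\<forall>ip. sup1 (F ip))"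

lemma blkgen_add: "blkgen p F \<Longrightarrow> blkgen p G \<Longrightarrow> blkgen p (F + G)"
  unfolding blkgen_def by (auto simp: sup1_add)

lemma blkgen_zsc: "blkgen p F \<Longrightarrow> blkgen p (zsc n F)"
  unfolding blkgen_def zsc_def by (auto simp: sup1_mult fun_eq_iff)

lemma blkgen_a0: "blkgen p (a0 i p)"
  unfolding blkgen_def a0_def by (auto simp: sup1_gen sup1_zero dest: Aidx_D)

lemma blkgen_a1: "i \<in> {1..7} \<Longrightarrow> blkgen p (a1 i p)"
  unfolding blkgen_def a1_def by (auto simp: sup1_gen sup1_zero)

lemma blkgen_a2: "p2 \<in> P0 \<Longrightarrow> blkgen p (a2 i p p2)"
  unfolding blkgen_def a2_def using sup1_S[OF P0_sub P0_fin, of p2] by (auto simp: sup1_zero)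

lemma sup1_eqI: assumes "sup1 f" "sup1 g" "\<And>m. m \<in> {1..7} \<Longrightarrow> f [m] = g [m]" shows "f = g"
proof (rule ext)
  fix w show "f w = g w"
  proof (cases "\<exists>m\<in>{1..7}. w = [m]")
    case True then show ?thesis using assms(3) by auto
  next
    case False then show ?thesis using assms(1,2) unfolding sup1_def by metis
  qed
qed

lemma blk_eqI: assumes a: "a \<in> Agrp" and F: "blkgen p F"
  and eq: "\<And>j m. j \<in> p \<Longrightarrow> m \<in> {1..7} \<Longrightarrow> a (j,p) [m] = F (j,p) [m]"
  shows "blk p a = F"
proof (rule ext)
  fix ip :: "nat \<times> nat set"
  obtain j q where ip: "ip = (j,q)" by force
  show "blk p a ip = F ip"
  proof (cases "q = p \<and> (j,q) \<in> Aidx")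
    case True
    then have "j \<in> p" using Aidx_D by blast
    then have "a (j,p) = F (j,p)"
      using eq Agrp_sup1[OF a] F unfolding blkgen_def by (intro sup1_eqI) auto
    then show ?thesis using True ip unfolding blk_def by simp
  next
    case False
    then have "F (j,q) = 0" using F unfolding blkgen_def by blast
    moreover have "blk p a (j,q) = 0" using False a unfolding blk_def Agrp_def by auto
    ultimately show ?thesis using ip by simp
  qed
qed

definition Ugens where
  "Ugens = ({a0 i p | i p. (i, p) \<in> Aidx}
            \<union> {a1 i p | i p. i \<in> {1..7} \<and> p \<in> P0}
            \<union> {a2 i p1 p2 | i p1 p2. i \<in> {1..7} \<and> p1 \<in> P0 \<and> p2 \<in> P0 \<and> i \<in> p1 \<and> i \<in> p2})"

lemma U_Ugens: "U = zspan Ugens" unfolding U_def Ugens_def ..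

lemma a0_in: "p \<in> P0 \<Longrightarrow> i \<in> p \<Longrightarrow> a0 i p \<in> zspan Ugens"
  unfolding Ugens_def by (rule zspan.base) (blast intro: Aidx_I)
lemma a1_in: "i \<in> {1..7} \<Longrightarrow> p \<in> P0 \<Longrightarrow> a1 i p \<in> zspan Ugens"
  unfolding Ugens_def by (rule zspan.base) blast
lemma a2_in: "p1 \<in> P0 \<Longrightarrow> p2 \<in> P0 \<Longrightarrow> i \<in> p1 \<Longrightarrow> i \<in> p2 \<Longrightarrow> a2 i p1 p2 \<in> zspan Ugens"
  unfolding Ugens_def using P0_sub by (intro zspan.base) blast

lemma if_app: "(if c then f else g) x = (if c then f x else g x)"
  by simp

lemma a0_apply: "a0 i p (j,q) w = (if (j,q) \<in> Aidx \<and> j = i \<and> q = p then gen i w else 0)"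
  by (simp only: a0_def prod.case if_app zero_fun_apply)
lemma a1_apply: "a1 i p (j,q) w = (if (j,q) \<in> Aidx \<and> q = p then gen i w else 0)"
  by (simp only: a1_def prod.case if_app zero_fun_apply)
lemma a2_apply: "a2 i p1 p2 (j,q) w = (if (j,q) \<in> Aidx \<and> j = i \<and> q = p1 then S p2 w else 0)"
  by (simp only: a2_def prod.case if_app zero_fun_apply)

lemma P0_mems: "{1,3,5} \<in> P0" "{1,4,7} \<in> P0" "{1,6} \<in> P0" "{2,3} \<in> P0" "{2,4,6} \<in> P0"
  "{2,5,7} \<in> P0" "{3,6,7} \<in> P0" "{4,5} \<in> P0"
  unfolding P0_eq by (simp_all only: insert_iff simp_thms)


definition dg :: "nat \<Rightarrow> ncpoly \<Rightarrow> bool" where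
  "dg d f \<longleftrightarrow> (\<forall>w. f w \<noteq> 0 \<longrightarrow> length w = d)"

lemma dg_ncmult: assumes "dg m p" "dg n q" shows "dg (m+n) (ncmult p q)"
  unfolding dg_def
proof (intro allI impI)
  fix w assume "ncmult p q w \<noteq> 0"
  then obtain k where "p (take k w) \<noteq> 0" "q (drop k w) \<noteq> 0" using ncmult_nz by blast
  then have "length (take k w) = m" "length (drop k w) = n" using assms unfolding dg_def by blast+
  then show "length w = m + n" by (metis append_take_drop_id length_append)
qed

lemma dg_diff: "dg d f \<Longrightarrow> dg d g \<Longrightarrow> dg d (f - g)"
  unfolding dg_def by (metis diff_zero minus_apply)

lemma dg_add: "dg d f \<Longrightarrow> dg d g \<Longrightarrow> dg d (f + g)"
  unfolding dg_def by (metis add.right_neutral plus_fun_apply)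

lemma dg_lbr: "dg m p \<Longrightarrow> dg n q \<Longrightarrow> dg (m+n) (lbr p q)"
  unfolding lbr_def by (metis add.commute dg_diff dg_ncmult)

lemma sup1_dg: "sup1 f \<Longrightarrow> dg 1 f"
  unfolding sup1_def dg_def by fastforce

lemma jac: assumes x: "sup1 x" and y: "sup1 y" and z: "sup1 z"
  shows "lbr (lbr x y) z + lbr x (lbr z y) = lbr y (lbr z x)"
proof (rule ext)
  fix w
  have d1: "dg 3 (lbr (lbr x y) z + lbr x (lbr z y))" "dg 3 (lbr y (lbr z x))"
    using sup1_dg[OF x] sup1_dg[OF y] sup1_dg[OF z]
    by (metis dg_add dg_lbr one_add_one numeral_Bit1 numeral_One add.commute)+
  show "(lbr (lbr x y) z + lbr x (lbr z y)) w = lbr y (lbr z x) w"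
  proof (cases "length w = 3")
    case True
    then obtain a b c where w: "w = [a,b,c]"
      by (cases w; simp; rename_tac u v; case_tac v; simp; rename_tac u' v'; case_tac v'; simp)
    show ?thesis unfolding w
      by (simp add: lbr_def ncm0 ncm1 ncm2 ncm3 sup1_vals[OF x] sup1_vals[OF y] sup1_vals[OF z] algebra_simps)
  next
    case False
    then show ?thesis using d1 unfolding dg_def by metis
  qed
qed

lemma rbar_sum: assumes "finite p" shows "(\<Sum>j\<in>p. rbar j p) = 0"
proof -
  have "(\<Sum>j\<in>p. rbar j p) = lbr (S p) (S p)"
    unfolding rbar_def S_def lbr_sum_left ..
  then show ?thesis by simp
qed

lemma R2_base: "(i,p) \<in> Bidx \<Longrightarrow> rbar i p \<in> R2"
  unfolding R2_def by (rule zspan.base) blast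

lemma rbar_R2: assumes p: "p \<in> P0" and i: "i \<in> p" shows "rbar i p \<in> R2"
proof (cases "i = Min p")
  case False
  then show ?thesis using Aidx_I[OF p i] by (intro R2_base) (simp add: Bidx_def)
next
  case True
  have fin: "finite p" using P0_fin[OF p] .
  have "0 = (\<Sum>j\<in>p. rbar j p)" using rbar_sum[OF fin] by simp
  also have "\<dots> = rbar i p + (\<Sum>j\<in>p - {i}. rbar j p)" using sum.remove[OF fin i] by simp
  finally have eq: "rbar i p = - (\<Sum>j\<in>p - {i}. rbar j p)" by (simp add: eq_neg_iff_add_eq_0)
  have "(\<Sum>j\<in>p - {i}. rbar j p) \<in> R2" unfolding R2_def
  proof (rule zspan_sum)
    show "finite (p - {i})" using fin by simp
  next
    fix j assume j: "j \<in> p - {i}"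
    then have "(j,p) \<in> Bidx" using Aidx_I[OF p] True unfolding Bidx_def by auto
    then show "rbar j p \<in> zspan {rbar i p |i p. (i, p) \<in> Bidx}" using R2_base unfolding R2_def by blast
  qed
  then show ?thesis unfolding eq R2_def by (rule zspan_uminus)
qed

lemma R3_base: "LieDeg 1 h \<Longrightarrow> r \<in> R2 \<Longrightarrow> lbr h r \<in> R3"
  unfolding R3_def by (rule zspan.base) blast

lemma tau_val_diff: "tau_val (a - b) i p = tau_val a i p - tau_val b i p"
  unfolding tau_val_def
  by (simp only: minus_apply lbr_diff_left lbr_diff_right sum_subtractf) (simp add: algebra_simps)

lemma tau_val_zero: "tau_val 0 i p = 0"
  unfolding tau_val_def by (simp only: zero_fun_apply lbr_zero_left lbr_zero_right sum.neutral_const add_0_right)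

lemma ker_zero: "0 \<in> ker_tau"
  unfolding ker_tau_def Agrp_def
  by (simp only: tau_val_zero zspan.zero R3_def zero_fun_apply LieDeg.zero mem_Collect_eq simp_thms ball_simps case_prod_beta) auto

lemma ker_diff: "a \<in> ker_tau \<Longrightarrow> b \<in> ker_tau \<Longrightarrow> a - b \<in> ker_tau"
  unfolding ker_tau_def Agrp_def
  by (auto simp: tau_val_diff R3_def intro!: zspan.diff LieDeg.diff)

lemma R3_uminus: "x \<in> R3 \<Longrightarrow> - x \<in> R3"
  unfolding R3_def by (rule zspan_uminus)
lemma R3_add: "x \<in> R3 \<Longrightarrow> y \<in> R3 \<Longrightarrow> x + y \<in> R3"
  unfolding R3_def by (rule zspan_add)
lemma R3_zero: "0 \<in> R3"
  unfolding R3_def by (rule zspan.zero)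

lemma Bidx_D: "(k,q) \<in> Bidx \<Longrightarrow> q \<in> P0 \<and> k \<in> q \<and> k \<in> {1..7} \<and> (k,q) \<in> Aidx"
  unfolding Bidx_def Aidx_def by auto

lemma AgrpI2: assumes "\<And>ip. F ip = X \<or> F ip = 0" "LieDeg 1 X" "\<And>ip. ip \<notin> Aidx \<Longrightarrow> F ip = 0"
  shows "F \<in> Agrp"
  unfolding Agrp_def
proof (intro CollectI conjI ballI allI impI)
  fix ip show "LieDeg 1 (F ip)" using assms(1)[of ip] assms(2) LieDeg.zero by metis
next
  fix ip assume "ip \<notin> Aidx" then show "F ip = 0" by (rule assms(3))
qed

lemma a0_ker: assumes ip: "(i,p) \<in> Aidx" shows "a0 i p \<in> ker_tau"
proof -
  have i: "i \<in> {1..7}" using Aidx_D[OF ip] by blast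
  have L: "\<And>j q. lbr (gen j) (a0 i p (j,q)) = 0"
    by (simp add: a0_def)
  have t: "\<And>k q. tau_val (a0 i p) k q = 0"
    unfolding tau_val_def by (simp only: L lbr_zero_left lbr_zero_right sum.neutral_const add_0_right)
  have "a0 i p \<in> Agrp"
    by (rule AgrpI2[OF _ LieDeg.gen[OF i]]) (auto simp: a0_def split: prod.splits)
  then show ?thesis unfolding ker_tau_def using t R3_zero by auto
qed

lemma a1_ker: assumes m: "m \<in> {1..7}" and p: "p \<in> P0" shows "a1 m p \<in> ker_tau"
proof -
  have Ag: "a1 m p \<in> Agrp"
    by (rule AgrpI2[OF _ LieDeg.gen[OF m]]) (auto simp: a1_def split: prod.splits)
  have "tau_val (a1 m p) k q \<in> R3" if kq: "(k,q) \<in> Bidx" for k q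
  proof (cases "q = p")
    case False
    then have z: "\<And>j. a1 m p (j,q) = 0" by (simp add: a1_def)
    have "tau_val (a1 m p) k q = 0"
      unfolding tau_val_def by (simp only: z lbr_zero_left lbr_zero_right sum.neutral_const add_0_right)
    then show ?thesis using R3_zero by simp
  next
    case True
    have k: "k \<in> p" "k \<in> {1..7}" using Bidx_D[OF kq] True by auto
    have v: "\<And>j. j \<in> p \<Longrightarrow> a1 m p (j,p) = gen m" using Aidx_I[OF p] by (simp add: a1_def)
    have fin: "finite p" using P0_fin[OF p] .
    have sm: "(\<Sum>j\<in>p. lbr (gen j) (a1 m p (j,p))) = lbr (S p) (gen m)"
      unfolding S_def lbr_sum_left by (rule sum.cong) (simp_all add: v)
    have Sp: "sup1 (S p)" using sup1_S[OF P0_sub[OF p] fin] .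
    have "tau_val (a1 m p) k q = lbr (lbr (gen k) (gen m)) (S p) + lbr (gen k) (lbr (S p) (gen m))"
      unfolding tau_val_def True sm v[OF k(1)] ..
    also have "\<dots> = lbr (gen m) (lbr (S p) (gen k))"
      by (rule jac[OF sup1_gen[OF k(2)] sup1_gen[OF m] Sp])
    also have "\<dots> = - lbr (gen m) (rbar k p)"
      unfolding rbar_def by (simp only: lbr_anti[of "S p"] lbr_uminus_right)
    finally have eq: "tau_val (a1 m p) k q = - lbr (gen m) (rbar k p)" .
    have "lbr (gen m) (rbar k p) \<in> R3"
      by (rule R3_base[OF LieDeg.gen[OF m] rbar_R2[OF p k(1)]])
    then show ?thesis unfolding eq by (rule R3_uminus)
  qed
  then show ?thesis using Ag unfolding ker_tau_def by auto
qed

lemma a2_ker: assumes i: "i \<in> {1..7}" and p1: "p1 \<in> P0" and p2: "p2 \<in> P0"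
  and ip1: "i \<in> p1" and ip2: "i \<in> p2" shows "a2 i p1 p2 \<in> ker_tau"
proof -
  have LS2: "LieDeg 1 (S p2)" by (rule LieDeg_S[OF P0_sub[OF p2] P0_fin[OF p2]])
  have LS1: "LieDeg 1 (S p1)" by (rule LieDeg_S[OF P0_sub[OF p1] P0_fin[OF p1]])
  have Ag: "a2 i p1 p2 \<in> Agrp"
    by (rule AgrpI2[OF _ LS2]) (auto simp: a2_def split: prod.splits)
  have r2: "rbar i p2 \<in> R2" by (rule rbar_R2[OF p2 ip2])
  have "tau_val (a2 i p1 p2) k q \<in> R3" if kq: "(k,q) \<in> Bidx" for k q
  proof (cases "q = p1")
    case False
    then have z: "\<And>j. a2 i p1 p2 (j,q) = 0" by (simp add: a2_def)
    have "tau_val (a2 i p1 p2) k q = 0"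
      unfolding tau_val_def by (simp only: z lbr_zero_left lbr_zero_right sum.neutral_const add_0_right)
    then show ?thesis using R3_zero by simp
  next
    case True
    have k: "k \<in> p1" "k \<in> {1..7}" using Bidx_D[OF kq] True by auto
    have v: "\<And>j. j \<in> p1 \<Longrightarrow> a2 i p1 p2 (j,p1) = (if j = i then S p2 else 0)" using Aidx_I[OF p1] by (simp add: a2_def)
    have fin: "finite p1" using P0_fin[OF p1] .
    have sm: "(\<Sum>j\<in>p1. lbr (gen j) (a2 i p1 p2 (j,p1))) = rbar i p2"
    proof -
      have "(\<Sum>j\<in>p1. lbr (gen j) (a2 i p1 p2 (j,p1))) = (\<Sum>j\<in>p1. if j = i then rbar i p2 else 0)"
        by (rule sum.cong) (simp_all add: v rbar_def)
      also have "\<dots> = rbar i p2" using fin ip1 by (simp add: sum.delta')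
      finally show ?thesis .
    qed
    have first: "lbr (lbr (gen k) (a2 i p1 p2 (k,p1))) (S p1) \<in> R3"
    proof (cases "k = i")
      case True
      have "lbr (lbr (gen k) (a2 i p1 p2 (k,p1))) (S p1) = - lbr (S p1) (rbar i p2)"
        using True v[OF k(1)] by (simp add: rbar_def lbr_anti[of _ "S p1"])
      then show ?thesis using R3_uminus[OF R3_base[OF LS1 r2]] by simp
    next
      case False
      then have "lbr (lbr (gen k) (a2 i p1 p2 (k,p1))) (S p1) = 0" using v[OF k(1)] by simp
      then show ?thesis using R3_zero by simp
    qed
    have second: "lbr (gen k) (rbar i p2) \<in> R3"
      by (rule R3_base[OF LieDeg.gen[OF k(2)] r2])
    have "tau_val (a2 i p1 p2) k q = lbr (lbr (gen k) (a2 i p1 p2 (k,p1))) (S p1) + lbr (gen k) (rbar i p2)"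
      unfolding tau_val_def True sm ..
    then show ?thesis using R3_add[OF first second] by simp
  qed
  then show ?thesis using Ag unfolding ker_tau_def by auto
qed

lemma U_sub_ker: "U \<subseteq> ker_tau"
proof
  fix x assume "x \<in> U"
  then show "x \<in> ker_tau" unfolding U_def
  proof (induction rule: zspan.induct)
    case zero then show ?case by (rule ker_zero)
  next
    case (base s) then show ?case by (auto intro: a0_ker a1_ker a2_ker)
  next
    case (diff a b) show ?case by (rule ker_diff[OF diff.IH])
  qed
qed


definition wfn :: "(nat list \<times> int) list \<Rightarrow> ncpoly \<Rightarrow> int" where
  "wfn L f = (\<Sum>(w,c)\<leftarrow>L. c * f w)"

lemma wfn_diff: "wfn L (f - g) = wfn L f - wfn L g"
  unfolding wfn_def by (induction L) (auto simp: algebra_simps)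
lemma wfn_zero: "wfn L 0 = 0"
  unfolding wfn_def by (induction L) auto

lemma R3_wf: assumes h: "\<And>h k q. sup1 h \<Longrightarrow> (k,q) \<in> Bidx \<Longrightarrow> wfn L (lbr h (rbar k q)) = 0"
  and f: "f \<in> R3" shows "wfn L f = 0"
  using f unfolding R3_def
proof (induction rule: zspan.induct)
  case zero then show ?case by (rule wfn_zero)
next
  case (base s)
  then obtain hh r where s: "s = lbr hh r" and hh: "LieDeg 1 hh" and r: "r \<in> R2" by blast
  from r have "wfn L (lbr hh r) = 0" unfolding R2_def
  proof (induction rule: zspan.induct)
    case zero then show ?case by (simp only: lbr_zero_right wfn_zero)
  next
    case (base x) then show ?case using h[OF LieDeg1_sup1[OF hh]] by blast
  next
    case (diff x y) then show ?case by (simp only: lbr_diff_right wfn_diff diff_self)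
  qed
  then show ?case using s by simp
next
  case (diff x y) then show ?case by (simp only: wfn_diff diff_self)
qed

lemmas evs = ncm0 ncm1 ncm2 ncm3 minus_apply lbr_def rbar_def sum_fun_apply plus_fun_apply tau_val_def

definition L0 :: "(nat list \<times> int) list" where "L0 = [([1,2,5], -1), ([1,5,7], -1), ([3,1,7], -1), ([3,4,1], -1), ([5,6,3], -1), ([5,7,3], 1), ([7,2,1], 1), ([7,4,3], 1), ([7,5,3], 1), ([7,6,5], 1)]"

lemma L0_R3: "sup1 h \<Longrightarrow> (k,q) \<in> Bidx \<Longrightarrow> wfn L0 (lbr h (rbar k q)) = 0"
  by (erule Bidx_all[where P = "\<lambda>k q. wfn L0 (lbr h (rbar k q)) = 0", rotated -1])
     (simp_all add: L0_def wfn_def evs sup1_vals)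

lemma E0: assumes "\<And>ip. sup1 (a ip)" "tau_val a 5 {1,3,5} \<in> R3"
  shows "(1) * a (1,{1,3,5}) [2] + (1) * a (3,{1,3,5}) [6] + (-1) * a (3,{1,3,5}) [7] + (-1) * a (5,{1,3,5}) [2] + (-1) * a (5,{1,3,5}) [6] + (1) * a (5,{1,3,5}) [7] = 0"
proof -
  have z: "\<And>ip. a ip [] = 0" "\<And>ip u v w. a ip (u#v#w) = 0" using assms(1) sup1_vals by blast+
  have "wfn L0 (tau_val a 5 {1,3,5}) = 0" by (rule R3_wf[OF L0_R3 assms(2)])
  then show ?thesis by (simp add: L0_def wfn_def evs z)
qed

definition L1 :: "(nat list \<times> int) list" where "L1 = [([1,3,3], -2), ([1,5,1], -1), ([1,5,3], 2), ([3,1,1], -2), ([5,3,3], 2)]"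

lemma L1_R3: "sup1 h \<Longrightarrow> (k,q) \<in> Bidx \<Longrightarrow> wfn L1 (lbr h (rbar k q)) = 0"
  by (erule Bidx_all[where P = "\<lambda>k q. wfn L1 (lbr h (rbar k q)) = 0", rotated -1])
     (simp_all add: L1_def wfn_def evs sup1_vals)

lemma E1: assumes "\<And>ip. sup1 (a ip)" "tau_val a 3 {1,3,5} \<in> R3"
  shows "(2) * a (1,{1,3,5}) [3] + (-2) * a (1,{1,3,5}) [5] + (-2) * a (3,{1,3,5}) [1] + (2) * a (3,{1,3,5}) [5] + (2) * a (5,{1,3,5}) [1] + (-2) * a (5,{1,3,5}) [3] = 0"
proof -
  have z: "\<And>ip. a ip [] = 0" "\<And>ip u v w. a ip (u#v#w) = 0" using assms(1) sup1_vals by blast+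
  have "wfn L1 (tau_val a 3 {1,3,5}) = 0" by (rule R3_wf[OF L1_R3 assms(2)])
  then show ?thesis by (simp add: L1_def wfn_def evs z)
qed

definition L2 :: "(nat list \<times> int) list" where "L2 = [([1,2,5], -1), ([1,2,7], 1), ([3,1,4], 1), ([3,1,7], -1), ([3,6,5], -1), ([4,3,1], 1), ([5,3,7], -1), ([7,4,3], 1), ([7,5,1], -1), ([7,6,5], 1)]"

lemma L2_R3: "sup1 h \<Longrightarrow> (k,q) \<in> Bidx \<Longrightarrow> wfn L2 (lbr h (rbar k q)) = 0"
  by (erule Bidx_all[where P = "\<lambda>k q. wfn L2 (lbr h (rbar k q)) = 0", rotated -1])
     (simp_all add: L2_def wfn_def evs sup1_vals)

lemma E2: assumes "\<And>ip. sup1 (a ip)" "tau_val a 3 {1,3,5} \<in> R3"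
  shows "(1) * a (1,{1,3,5}) [4] + (-1) * a (1,{1,3,5}) [7] + (-1) * a (3,{1,3,5}) [4] + (-1) * a (3,{1,3,5}) [6] + (1) * a (3,{1,3,5}) [7] + (1) * a (5,{1,3,5}) [6] = 0"
proof -
  have z: "\<And>ip. a ip [] = 0" "\<And>ip u v w. a ip (u#v#w) = 0" using assms(1) sup1_vals by blast+
  have "wfn L2 (tau_val a 3 {1,3,5}) = 0" by (rule R3_wf[OF L2_R3 assms(2)])
  then show ?thesis by (simp add: L2_def wfn_def evs z)
qed

definition L3 :: "(nat list \<times> int) list" where "L3 = [([2,1,7], 1), ([2,4,7], -1), ([2,6,5], 1), ([4,1,2], -1), ([4,3,7], 1), ([6,2,5], 1), ([6,3,4], -1), ([7,2,6], -1), ([7,5,6], 1), ([7,6,4], -1)]"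

lemma L3_R3: "sup1 h \<Longrightarrow> (k,q) \<in> Bidx \<Longrightarrow> wfn L3 (lbr h (rbar k q)) = 0"
  by (erule Bidx_all[where P = "\<lambda>k q. wfn L3 (lbr h (rbar k q)) = 0", rotated -1])
     (simp_all add: L3_def wfn_def evs sup1_vals)

lemma E3: assumes "\<And>ip. sup1 (a ip)" "tau_val a 7 {1,4,7} \<in> R3"
  shows "(1) * a (1,{1,4,7}) [2] + (-1) * a (4,{1,4,7}) [2] + (-1) * a (4,{1,4,7}) [3] + (1) * a (4,{1,4,7}) [6] + (1) * a (7,{1,4,7}) [3] + (-1) * a (7,{1,4,7}) [6] = 0"
proof -
  have z: "\<And>ip. a ip [] = 0" "\<And>ip u v w. a ip (u#v#w) = 0" using assms(1) sup1_vals by blast+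
  have "wfn L3 (tau_val a 7 {1,4,7}) = 0" by (rule R3_wf[OF L3_R3 assms(2)])
  then show ?thesis by (simp add: L3_def wfn_def evs z)
qed

definition L4 :: "(nat list \<times> int) list" where "L4 = [([1,5,7], 1), ([2,4,7], 1), ([2,7,1], 1), ([3,1,7], 1), ([3,4,1], 1), ([3,7,4], 1), ([4,1,2], 1), ([4,6,7], 1), ([5,2,1], 1), ([5,3,7], 1), ([5,6,3], 1), ([5,7,6], 1), ([6,2,7], 1), ([6,3,4], 1), ([6,5,2], 1)]"

lemma L4_R3: "sup1 h \<Longrightarrow> (k,q) \<in> Bidx \<Longrightarrow> wfn L4 (lbr h (rbar k q)) = 0"
  by (erule Bidx_all[where P = "\<lambda>k q. wfn L4 (lbr h (rbar k q)) = 0", rotated -1])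
     (simp_all add: L4_def wfn_def evs sup1_vals)

lemma E4: assumes "\<And>ip. sup1 (a ip)" "tau_val a 7 {1,4,7} \<in> R3"
  shows "(1) * a (1,{1,4,7}) [3] + (-1) * a (1,{1,4,7}) [5] + (1) * a (4,{1,4,7}) [2] + (-1) * a (4,{1,4,7}) [6] + (-1) * a (7,{1,4,7}) [2] + (-1) * a (7,{1,4,7}) [3] + (1) * a (7,{1,4,7}) [5] + (1) * a (7,{1,4,7}) [6] = 0"
proof -
  have z: "\<And>ip. a ip [] = 0" "\<And>ip u v w. a ip (u#v#w) = 0" using assms(1) sup1_vals by blast+
  have "wfn L4 (tau_val a 7 {1,4,7}) = 0" by (rule R3_wf[OF L4_R3 assms(2)])
  then show ?thesis by (simp add: L4_def wfn_def evs z)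
qed

definition L5 :: "(nat list \<times> int) list" where "L5 = [([4,1,7], -2), ([4,4,1], -2), ([4,7,4], -1), ([7,1,7], 1), ([7,4,7], -1)]"

lemma L5_R3: "sup1 h \<Longrightarrow> (k,q) \<in> Bidx \<Longrightarrow> wfn L5 (lbr h (rbar k q)) = 0"
  by (erule Bidx_all[where P = "\<lambda>k q. wfn L5 (lbr h (rbar k q)) = 0", rotated -1])
     (simp_all add: L5_def wfn_def evs sup1_vals)

lemma E5: assumes "\<And>ip. sup1 (a ip)" "tau_val a 4 {1,4,7} \<in> R3"
  shows "(2) * a (1,{1,4,7}) [4] + (-2) * a (1,{1,4,7}) [7] + (-2) * a (4,{1,4,7}) [1] + (2) * a (4,{1,4,7}) [7] + (2) * a (7,{1,4,7}) [1] + (-2) * a (7,{1,4,7}) [4] = 0"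
proof -
  have z: "\<And>ip. a ip [] = 0" "\<And>ip u v w. a ip (u#v#w) = 0" using assms(1) sup1_vals by blast+
  have "wfn L5 (tau_val a 4 {1,4,7}) = 0" by (rule R3_wf[OF L5_R3 assms(2)])
  then show ?thesis by (simp add: L5_def wfn_def evs z)
qed

definition L6 :: "(nat list \<times> int) list" where "L6 = [([1,2,4], 1), ([1,2,6], -1), ([1,5,6], -1), ([1,7,6], -1), ([3,4,1], -1), ([3,7,1], 1), ([4,3,7], 1), ([4,7,6], 1), ([6,3,1], 1), ([6,3,4], -1), ([6,4,1], 1), ([6,5,3], 1), ([7,4,3], 1)]"

lemma L6_R3: "sup1 h \<Longrightarrow> (k,q) \<in> Bidx \<Longrightarrow> wfn L6 (lbr h (rbar k q)) = 0"
  by (erule Bidx_all[where P = "\<lambda>k q. wfn L6 (lbr h (rbar k q)) = 0", rotated -1])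
     (simp_all add: L6_def wfn_def evs sup1_vals)

lemma E6: assumes "\<And>ip. sup1 (a ip)" "tau_val a 6 {1,6} \<in> R3"
  shows "(1) * a (1,{1,6}) [2] + (-1) * a (1,{1,6}) [3] + (-1) * a (1,{1,6}) [4] + (1) * a (1,{1,6}) [5] + (1) * a (1,{1,6}) [7] + (-1) * a (6,{1,6}) [2] + (1) * a (6,{1,6}) [3] + (1) * a (6,{1,6}) [4] + (-1) * a (6,{1,6}) [5] + (-1) * a (6,{1,6}) [7] = 0"
proof -
  have z: "\<And>ip. a ip [] = 0" "\<And>ip u v w. a ip (u#v#w) = 0" using assms(1) sup1_vals by blast+
  have "wfn L6 (tau_val a 6 {1,6}) = 0" by (rule R3_wf[OF L6_R3 assms(2)])
  then show ?thesis by (simp add: L6_def wfn_def evs z)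
qed

definition L7 :: "(nat list \<times> int) list" where "L7 = [([2,1,3], -1), ([2,1,5], 1), ([2,5,6], -1), ([2,7,3], -1), ([2,7,6], 1), ([3,4,2], -1), ([3,4,6], 1), ([3,5,2], 1), ([3,6,2], 1), ([3,7,5], 1), ([5,3,6], 1), ([6,5,3], 1), ([7,5,6], 1), ([7,6,5], 1)]"

lemma L7_R3: "sup1 h \<Longrightarrow> (k,q) \<in> Bidx \<Longrightarrow> wfn L7 (lbr h (rbar k q)) = 0"
  by (erule Bidx_all[where P = "\<lambda>k q. wfn L7 (lbr h (rbar k q)) = 0", rotated -1])
     (simp_all add: L7_def wfn_def evs sup1_vals)

lemma E7: assumes "\<And>ip. sup1 (a ip)" "tau_val a 3 {2,3} \<in> R3"
  shows "(1) * a (2,{2,3}) [1] + (1) * a (2,{2,3}) [4] + (-1) * a (2,{2,3}) [5] + (-1) * a (2,{2,3}) [6] + (1) * a (2,{2,3}) [7] + (-1) * a (3,{2,3}) [1] + (-1) * a (3,{2,3}) [4] + (1) * a (3,{2,3}) [5] + (1) * a (3,{2,3}) [6] + (-1) * a (3,{2,3}) [7] = 0"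
proof -
  have z: "\<And>ip. a ip [] = 0" "\<And>ip u v w. a ip (u#v#w) = 0" using assms(1) sup1_vals by blast+
  have "wfn L7 (tau_val a 3 {2,3}) = 0" by (rule R3_wf[OF L7_R3 assms(2)])
  then show ?thesis by (simp add: L7_def wfn_def evs z)
qed

definition L8 :: "(nat list \<times> int) list" where "L8 = [([2,1,4], -1), ([2,5,6], -1), ([4,7,3], -1), ([4,7,6], 1), ([6,3,4], -1), ([6,5,7], 1), ([7,1,2], 1), ([7,2,6], -1), ([7,4,2], -1), ([7,4,3], -1), ([7,4,6], 1)]"

lemma L8_R3: "sup1 h \<Longrightarrow> (k,q) \<in> Bidx \<Longrightarrow> wfn L8 (lbr h (rbar k q)) = 0"
  by (erule Bidx_all[where P = "\<lambda>k q. wfn L8 (lbr h (rbar k q)) = 0", rotated -1])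
     (simp_all add: L8_def wfn_def evs sup1_vals)

lemma E8: assumes "\<And>ip. sup1 (a ip)" "tau_val a 4 {2,4,6} \<in> R3"
  shows "(1) * a (2,{2,4,6}) [1] + (-1) * a (4,{2,4,6}) [1] + (-1) * a (4,{2,4,6}) [3] + (1) * a (4,{2,4,6}) [7] + (1) * a (6,{2,4,6}) [3] + (-1) * a (6,{2,4,6}) [7] = 0"
proof -
  have z: "\<And>ip. a ip [] = 0" "\<And>ip u v w. a ip (u#v#w) = 0" using assms(1) sup1_vals by blast+
  have "wfn L8 (tau_val a 4 {2,4,6}) = 0" by (rule R3_wf[OF L8_R3 assms(2)])
  then show ?thesis by (simp add: L8_def wfn_def evs z)
qed

definition L9 :: "(nat list \<times> int) list" where "L9 = [([2,4,4], -2), ([4,6,4], -1), ([6,2,4], -2), ([6,2,6], 1), ([6,6,4], 2)]"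

lemma L9_R3: "sup1 h \<Longrightarrow> (k,q) \<in> Bidx \<Longrightarrow> wfn L9 (lbr h (rbar k q)) = 0"
  by (erule Bidx_all[where P = "\<lambda>k q. wfn L9 (lbr h (rbar k q)) = 0", rotated -1])
     (simp_all add: L9_def wfn_def evs sup1_vals)

lemma E9: assumes "\<And>ip. sup1 (a ip)" "tau_val a 4 {2,4,6} \<in> R3"
  shows "(2) * a (2,{2,4,6}) [4] + (-2) * a (2,{2,4,6}) [6] + (-2) * a (4,{2,4,6}) [2] + (2) * a (4,{2,4,6}) [6] + (2) * a (6,{2,4,6}) [2] + (-2) * a (6,{2,4,6}) [4] = 0"
proof -
  have z: "\<And>ip. a ip [] = 0" "\<And>ip u v w. a ip (u#v#w) = 0" using assms(1) sup1_vals by blast+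
  have "wfn L9 (tau_val a 4 {2,4,6}) = 0" by (rule R3_wf[OF L9_R3 assms(2)])
  then show ?thesis by (simp add: L9_def wfn_def evs z)
qed

definition L10 :: "(nat list \<times> int) list" where "L10 = [([2,4,7], -1), ([2,5,6], -1), ([4,1,2], -1), ([4,3,6], -1), ([4,3,7], 1), ([4,7,6], 1), ([7,1,2], 1), ([7,2,6], -1), ([7,4,6], 1), ([7,5,6], 1)]"

lemma L10_R3: "sup1 h \<Longrightarrow> (k,q) \<in> Bidx \<Longrightarrow> wfn L10 (lbr h (rbar k q)) = 0"
  by (erule Bidx_all[where P = "\<lambda>k q. wfn L10 (lbr h (rbar k q)) = 0", rotated -1])
     (simp_all add: L10_def wfn_def evs sup1_vals)

lemma E10: assumes "\<And>ip. sup1 (a ip)" "tau_val a 6 {2,4,6} \<in> R3"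
  shows "(1) * a (2,{2,4,6}) [5] + (-1) * a (2,{2,4,6}) [7] + (1) * a (4,{2,4,6}) [3] + (-1) * a (6,{2,4,6}) [3] + (-1) * a (6,{2,4,6}) [5] + (1) * a (6,{2,4,6}) [7] = 0"
proof -
  have z: "\<And>ip. a ip [] = 0" "\<And>ip u v w. a ip (u#v#w) = 0" using assms(1) sup1_vals by blast+
  have "wfn L10 (tau_val a 6 {2,4,6}) = 0" by (rule R3_wf[OF L10_R3 assms(2)])
  then show ?thesis by (simp add: L10_def wfn_def evs z)
qed

definition L11 :: "(nat list \<times> int) list" where "L11 = [([1,2,5], 1), ([1,4,3], 1), ([3,1,7], 1), ([3,5,6], -1), ([5,6,7], -1), ([6,3,5], -1), ([7,2,1], -1), ([7,3,5], 1), ([7,4,3], -1), ([7,5,1], 1)]"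

lemma L11_R3: "sup1 h \<Longrightarrow> (k,q) \<in> Bidx \<Longrightarrow> wfn L11 (lbr h (rbar k q)) = 0"
  by (erule Bidx_all[where P = "\<lambda>k q. wfn L11 (lbr h (rbar k q)) = 0", rotated -1])
     (simp_all add: L11_def wfn_def evs sup1_vals)

lemma E11: assumes "\<And>ip. sup1 (a ip)" "tau_val a 5 {2,5,7} \<in> R3"
  shows "(1) * a (2,{2,5,7}) [1] + (-1) * a (5,{2,5,7}) [1] + (1) * a (5,{2,5,7}) [3] + (-1) * a (5,{2,5,7}) [6] + (-1) * a (7,{2,5,7}) [3] + (1) * a (7,{2,5,7}) [6] = 0"
proof -
  have z: "\<And>ip. a ip [] = 0" "\<And>ip u v w. a ip (u#v#w) = 0" using assms(1) sup1_vals by blast+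
  have "wfn L11 (tau_val a 5 {2,5,7}) = 0" by (rule R3_wf[OF L11_R3 assms(2)])
  then show ?thesis by (simp add: L11_def wfn_def evs z)
qed

definition L12 :: "(nat list \<times> int) list" where "L12 = [([1,2,4], 1), ([1,3,4], 1), ([1,4,2], 1), ([1,5,7], -1), ([1,7,3], 1), ([2,4,7], -1), ([2,5,6], -1), ([2,7,1], -1), ([3,1,4], 1), ([4,6,7], -1), ([4,7,3], -1), ([5,2,1], -1), ([5,3,7], -1), ([5,6,3], -1), ([5,7,6], -1), ([6,3,4], -1), ([7,2,6], -1), ([7,3,1], 1)]"

lemma L12_R3: "sup1 h \<Longrightarrow> (k,q) \<in> Bidx \<Longrightarrow> wfn L12 (lbr h (rbar k q)) = 0"
  by (erule Bidx_all[where P = "\<lambda>k q. wfn L12 (lbr h (rbar k q)) = 0", rotated -1])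
     (simp_all add: L12_def wfn_def evs sup1_vals)

lemma E12: assumes "\<And>ip. sup1 (a ip)" "tau_val a 7 {2,5,7} \<in> R3"
  shows "(1) * a (2,{2,5,7}) [4] + (-1) * a (2,{2,5,7}) [6] + (-1) * a (5,{2,5,7}) [1] + (1) * a (5,{2,5,7}) [3] + (1) * a (7,{2,5,7}) [1] + (-1) * a (7,{2,5,7}) [3] + (-1) * a (7,{2,5,7}) [4] + (1) * a (7,{2,5,7}) [6] = 0"
proof -
  have z: "\<And>ip. a ip [] = 0" "\<And>ip u v w. a ip (u#v#w) = 0" using assms(1) sup1_vals by blast+
  have "wfn L12 (tau_val a 7 {2,5,7}) = 0" by (rule R3_wf[OF L12_R3 assms(2)])
  then show ?thesis by (simp add: L12_def wfn_def evs z)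
qed

definition L13 :: "(nat list \<times> int) list" where "L13 = [([2,7,7], -1), ([5,2,7], -1), ([5,5,2], -1), ([5,7,7], 1), ([7,5,5], 1)]"

lemma L13_R3: "sup1 h \<Longrightarrow> (k,q) \<in> Bidx \<Longrightarrow> wfn L13 (lbr h (rbar k q)) = 0"
  by (erule Bidx_all[where P = "\<lambda>k q. wfn L13 (lbr h (rbar k q)) = 0", rotated -1])
     (simp_all add: L13_def wfn_def evs sup1_vals)

lemma E13: assumes "\<And>ip. sup1 (a ip)" "tau_val a 5 {2,5,7} \<in> R3"
  shows "(1) * a (2,{2,5,7}) [5] + (-1) * a (2,{2,5,7}) [7] + (-1) * a (5,{2,5,7}) [2] + (1) * a (5,{2,5,7}) [7] + (1) * a (7,{2,5,7}) [2] + (-1) * a (7,{2,5,7}) [5] = 0"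
proof -
  have z: "\<And>ip. a ip [] = 0" "\<And>ip u v w. a ip (u#v#w) = 0" using assms(1) sup1_vals by blast+
  have "wfn L13 (tau_val a 5 {2,5,7}) = 0" by (rule R3_wf[OF L13_R3 assms(2)])
  then show ?thesis by (simp add: L13_def wfn_def evs z)
qed

definition L14 :: "(nat list \<times> int) list" where "L14 = [([1,4,3], -1), ([1,5,7], -1), ([1,7,3], 1), ([2,5,6], -1), ([2,7,1], -1), ([3,6,5], -1), ([3,7,4], -1), ([4,1,2], -1), ([4,6,7], -1), ([5,2,1], -1), ([6,2,7], -1), ([6,3,4], -1), ([6,7,5], -1), ([7,3,1], 1), ([7,3,5], -1), ([7,4,2], -1)]"

lemma L14_R3: "sup1 h \<Longrightarrow> (k,q) \<in> Bidx \<Longrightarrow> wfn L14 (lbr h (rbar k q)) = 0"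
  by (erule Bidx_all[where P = "\<lambda>k q. wfn L14 (lbr h (rbar k q)) = 0", rotated -1])
     (simp_all add: L14_def wfn_def evs sup1_vals)

lemma E14: assumes "\<And>ip. sup1 (a ip)" "tau_val a 7 {3,6,7} \<in> R3"
  shows "(1) * a (3,{3,6,7}) [1] + (-1) * a (3,{3,6,7}) [5] + (1) * a (6,{3,6,7}) [2] + (-1) * a (6,{3,6,7}) [4] + (-1) * a (7,{3,6,7}) [1] + (-1) * a (7,{3,6,7}) [2] + (1) * a (7,{3,6,7}) [4] + (1) * a (7,{3,6,7}) [5] = 0"
proof -
  have z: "\<And>ip. a ip [] = 0" "\<And>ip u v w. a ip (u#v#w) = 0" using assms(1) sup1_vals by blast+
  have "wfn L14 (tau_val a 7 {3,6,7}) = 0" by (rule R3_wf[OF L14_R3 assms(2)])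
  then show ?thesis by (simp add: L14_def wfn_def evs z)
qed

definition L15 :: "(nat list \<times> int) list" where "L15 = [([2,1,4], -1), ([2,1,7], 1), ([4,3,6], -1), ([4,6,7], -1), ([6,2,7], -1), ([6,5,2], -1), ([6,5,7], 1), ([7,3,4], 1), ([7,4,2], -1)]"

lemma L15_R3: "sup1 h \<Longrightarrow> (k,q) \<in> Bidx \<Longrightarrow> wfn L15 (lbr h (rbar k q)) = 0"
  by (erule Bidx_all[where P = "\<lambda>k q. wfn L15 (lbr h (rbar k q)) = 0", rotated -1])
     (simp_all add: L15_def wfn_def evs sup1_vals)

lemma E15: assumes "\<And>ip. sup1 (a ip)" "tau_val a 7 {3,6,7} \<in> R3"
  shows "(1) * a (3,{3,6,7}) [4] + (1) * a (6,{3,6,7}) [2] + (-1) * a (6,{3,6,7}) [4] + (-1) * a (6,{3,6,7}) [5] + (-1) * a (7,{3,6,7}) [2] + (1) * a (7,{3,6,7}) [5] = 0"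
proof -
  have z: "\<And>ip. a ip [] = 0" "\<And>ip u v w. a ip (u#v#w) = 0" using assms(1) sup1_vals by blast+
  have "wfn L15 (tau_val a 7 {3,6,7}) = 0" by (rule R3_wf[OF L15_R3 assms(2)])
  then show ?thesis by (simp add: L15_def wfn_def evs z)
qed

definition L16 :: "(nat list \<times> int) list" where "L16 = [([3,7,7], -2), ([6,3,6], 1), ([6,3,7], -2), ([6,7,6], -1), ([6,7,7], 2)]"

lemma L16_R3: "sup1 h \<Longrightarrow> (k,q) \<in> Bidx \<Longrightarrow> wfn L16 (lbr h (rbar k q)) = 0"
  by (erule Bidx_all[where P = "\<lambda>k q. wfn L16 (lbr h (rbar k q)) = 0", rotated -1])
     (simp_all add: L16_def wfn_def evs sup1_vals)

lemma E16: assumes "\<And>ip. sup1 (a ip)" "tau_val a 6 {3,6,7} \<in> R3"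
  shows "(2) * a (3,{3,6,7}) [6] + (-2) * a (3,{3,6,7}) [7] + (-2) * a (6,{3,6,7}) [3] + (2) * a (6,{3,6,7}) [7] + (2) * a (7,{3,6,7}) [3] + (-2) * a (7,{3,6,7}) [6] = 0"
proof -
  have z: "\<And>ip. a ip [] = 0" "\<And>ip u v w. a ip (u#v#w) = 0" using assms(1) sup1_vals by blast+
  have "wfn L16 (tau_val a 6 {3,6,7}) = 0" by (rule R3_wf[OF L16_R3 assms(2)])
  then show ?thesis by (simp add: L16_def wfn_def evs z)
qed

definition L17 :: "(nat list \<times> int) list" where "L17 = [([1,3,4], -1), ([2,7,1], 1), ([2,7,4], -1), ([3,5,4], -1), ([4,1,2], 1), ([4,1,5], -1), ([4,2,5], -1), ([5,2,1], 1), ([5,4,3], -1), ([5,6,2], -1), ([5,6,4], 1), ([5,7,1], -1), ([5,7,4], 1)]"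

lemma L17_R3: "sup1 h \<Longrightarrow> (k,q) \<in> Bidx \<Longrightarrow> wfn L17 (lbr h (rbar k q)) = 0"
  by (erule Bidx_all[where P = "\<lambda>k q. wfn L17 (lbr h (rbar k q)) = 0", rotated -1])
     (simp_all add: L17_def wfn_def evs sup1_vals)

lemma E17: assumes "\<And>ip. sup1 (a ip)" "tau_val a 5 {4,5} \<in> R3"
  shows "(1) * a (4,{4,5}) [1] + (1) * a (4,{4,5}) [2] + (-1) * a (4,{4,5}) [3] + (-1) * a (4,{4,5}) [6] + (-1) * a (4,{4,5}) [7] + (-1) * a (5,{4,5}) [1] + (-1) * a (5,{4,5}) [2] + (1) * a (5,{4,5}) [3] + (1) * a (5,{4,5}) [6] + (1) * a (5,{4,5}) [7] = 0"
proof -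
  have z: "\<And>ip. a ip [] = 0" "\<And>ip u v w. a ip (u#v#w) = 0" using assms(1) sup1_vals by blast+
  have "wfn L17 (tau_val a 5 {4,5}) = 0" by (rule R3_wf[OF L17_R3 assms(2)])
  then show ?thesis by (simp add: L17_def wfn_def evs z)
qed


lemma blk_135: assumes a: "a \<in> Agrp"
    and e0: "(1) * a (1,{1,3,5}) [2] + (1) * a (3,{1,3,5}) [6] + (-1) * a (3,{1,3,5}) [7] + (-1) * a (5,{1,3,5}) [2] + (-1) * a (5,{1,3,5}) [6] + (1) * a (5,{1,3,5}) [7] = 0"
    and e1: "(2) * a (1,{1,3,5}) [3] + (-2) * a (1,{1,3,5}) [5] + (-2) * a (3,{1,3,5}) [1] + (2) * a (3,{1,3,5}) [5] + (2) * a (5,{1,3,5}) [1] + (-2) * a (5,{1,3,5}) [3] = 0"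
    and e2: "(1) * a (1,{1,3,5}) [4] + (-1) * a (1,{1,3,5}) [7] + (-1) * a (3,{1,3,5}) [4] + (-1) * a (3,{1,3,5}) [6] + (1) * a (3,{1,3,5}) [7] + (1) * a (5,{1,3,5}) [6] = 0"
  shows "blk {1,3,5} a \<in> zspan Ugens"
proof -
  define F where "F = zsc ((1) * a (1,{1,3,5}) [1] + (-1) * a (1,{1,3,5}) [5] + (-1) * a (1,{1,3,5}) [6] + (-1) * a (1,{1,3,5}) [7] + (-1) * a (3,{1,3,5}) [1] + (1) * a (3,{1,3,5}) [5] + (-1) * a (3,{1,3,5}) [6] + (1) * a (3,{1,3,5}) [7] + (2) * a (5,{1,3,5}) [6]) (a0 1 {1,3,5}) + zsc ((-1) * a (1,{1,3,5}) [3] + (1) * a (1,{1,3,5}) [5] + (-1) * a (3,{1,3,5}) [2] + (1) * a (3,{1,3,5}) [3] + (-1) * a (3,{1,3,5}) [5] + (-2) * a (3,{1,3,5}) [6] + (1) * a (3,{1,3,5}) [7] + (1) * a (5,{1,3,5}) [2] + (2) * a (5,{1,3,5}) [6] + (-1) * a (5,{1,3,5}) [7]) (a0 3 {1,3,5}) + zsc ((1) * a (1,{1,3,5}) [3] + (1) * a (1,{1,3,5}) [4] + (-1) * a (1,{1,3,5}) [5] + (-1) * a (1,{1,3,5}) [7] + (-2) * a (3,{1,3,5}) [6] + (2) * a (3,{1,3,5}) [7] + (-1) * a (5,{1,3,5}) [3] + (-1) * a (5,{1,3,5}) [4] + (1) * a (5,{1,3,5}) [5] + (2) * a (5,{1,3,5})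 [6] + (-1) * a (5,{1,3,5}) [7]) (a0 5 {1,3,5}) + zsc ((-1) * a (1,{1,3,5}) [3] + (1) * a (1,{1,3,5}) [5] + (1) * a (3,{1,3,5}) [1] + (-1) * a (3,{1,3,5}) [5] + (1) * a (5,{1,3,5}) [3]) (a1 1 {1,3,5}) + zsc ((-1) * a (3,{1,3,5}) [6] + (1) * a (3,{1,3,5}) [7] + (1) * a (5,{1,3,5}) [2] + (1) * a (5,{1,3,5}) [6] + (-1) * a (5,{1,3,5}) [7]) (a1 2 {1,3,5}) + zsc ((1) * a (5,{1,3,5}) [3]) (a1 3 {1,3,5}) + zsc ((1) * a (1,{1,3,5}) [4] + (-1) * a (1,{1,3,5}) [7] + (-1) * a (3,{1,3,5}) [6] + (1) * a (3,{1,3,5}) [7] + (1) * a (5,{1,3,5}) [6]) (a1 4 {1,3,5}) + zsc ((-1) * a (1,{1,3,5}) [3] + (1) * a (1,{1,3,5}) [5] + (1) * a (5,{1,3,5}) [3]) (a1 5 {1,3,5}) + zsc ((1) * a (5,{1,3,5}) [6]) (a1 6 {1,3,5}) + zsc ((-1) * a (3,{1,3,5}) [6] + (1) * a (3,{1,3,5}) [7] + (1) * a (5,{1,3,5}) [6]) (a1 7 {1,3,5}) + zsc ((1) * a (1,{1,3,5}) [3] + (-1) * a (5,{1,3,5}) [3]) (a2 1 {1,3,5} {1,3,5}) + zsc ((1) * a (1,{1,3,5}) [7] + (1) * a (3,{1,3,5}) [6] + (-1) * a (3,{1,3,5}) [7] + (-1) * a (5,{1,3,5}) [6]) (a2 1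 {1,3,5} {1,4,7}) + zsc ((1) * a (1,{1,3,5}) [6] + (-1) * a (5,{1,3,5}) [6]) (a2 1 {1,3,5} {1,6}) + zsc ((1) * a (1,{1,3,5}) [3] + (-1) * a (1,{1,3,5}) [5] + (1) * a (3,{1,3,5}) [5] + (-1) * a (5,{1,3,5}) [3]) (a2 3 {1,3,5} {1,3,5}) + zsc ((1) * a (3,{1,3,5}) [2] + (1) * a (3,{1,3,5}) [6] + (-1) * a (3,{1,3,5}) [7] + (-1) * a (5,{1,3,5}) [2] + (-1) * a (5,{1,3,5}) [6] + (1) * a (5,{1,3,5}) [7]) (a2 3 {1,3,5} {2,3}) + zsc ((1) * a (3,{1,3,5}) [6] + (-1) * a (5,{1,3,5}) [6]) (a2 3 {1,3,5} {3,6,7}) + zsc ((1) * a (3,{1,3,5}) [6] + (-1) * a (3,{1,3,5}) [7] + (-1) * a (5,{1,3,5}) [6] + (1) * a (5,{1,3,5}) [7]) (a2 5 {1,3,5} {2,5,7}) + zsc ((-1) * a (1,{1,3,5}) [4] + (1) * a (1,{1,3,5}) [7] + (1) * a (3,{1,3,5}) [6] + (-1) * a (3,{1,3,5}) [7] + (1) * a (5,{1,3,5}) [4] + (-1) * a (5,{1,3,5}) [6]) (a2 5 {1,3,5} {4,5})"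
  have bg: "blkgen {1,3,5} F" unfolding F_def
    by (intro blkgen_add blkgen_zsc blkgen_a0 blkgen_a1 blkgen_a2) (simp_all add: P0_mems[simplified])
  have inU: "F \<in> zspan Ugens" unfolding F_def
    by (intro zspan_add zspan_zsc a0_in a1_in a2_in) (simp_all add: P0_mems[simplified])
  have "blk {1,3,5} a = F"
  proof (rule blk_eqI[OF a bg])
    fix j m :: nat assume jm: "j \<in> {1,3,5}" "m \<in> {1..7}"
    then have "j = 1 \<or> j = 3 \<or> j = 5" "m = 1 \<or> m = 2 \<or> m = 3 \<or> m = 4 \<or> m = 5 \<or> m = 6 \<or> m = 7" by auto
    then show "a (j,{1,3,5}) [m] = F (j,{1,3,5}) [m]"
      unfolding F_def
      by (elim disjE; simp add: zsc_apply a0_apply a1_apply a2_apply Aidx_I P0_mems[simplified]; use e0[simplified] e1[simplified] e2[simplified] in linarith)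
  qed
  then show ?thesis using inU by simp
qed

lemma blk_147: assumes a: "a \<in> Agrp"
    and e0: "(1) * a (1,{1,4,7}) [2] + (-1) * a (4,{1,4,7}) [2] + (-1) * a (4,{1,4,7}) [3] + (1) * a (4,{1,4,7}) [6] + (1) * a (7,{1,4,7}) [3] + (-1) * a (7,{1,4,7}) [6] = 0"
    and e1: "(1) * a (1,{1,4,7}) [3] + (-1) * a (1,{1,4,7}) [5] + (1) * a (4,{1,4,7}) [2] + (-1) * a (4,{1,4,7}) [6] + (-1) * a (7,{1,4,7}) [2] + (-1) * a (7,{1,4,7}) [3] + (1) * a (7,{1,4,7}) [5] + (1) * a (7,{1,4,7}) [6] = 0"
    and e2: "(2) * a (1,{1,4,7}) [4] + (-2) * a (1,{1,4,7}) [7] + (-2) * a (4,{1,4,7}) [1] + (2) * a (4,{1,4,7}) [7] + (2) * a (7,{1,4,7}) [1] + (-2) * a (7,{1,4,7}) [4] = 0"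
  shows "blk {1,4,7} a \<in> zspan Ugens"
proof -
  define F where "F = zsc ((1) * a (1,{1,4,7}) [1] + (-1) * a (1,{1,4,7}) [3] + (-1) * a (1,{1,4,7}) [6] + (-1) * a (1,{1,4,7}) [7] + (-1) * a (4,{1,4,7}) [1] + (2) * a (4,{1,4,7}) [3] + (1) * a (4,{1,4,7}) [7] + (-1) * a (7,{1,4,7}) [3] + (1) * a (7,{1,4,7}) [6]) (a0 1 {1,4,7}) + zsc ((1) * a (1,{1,4,7}) [2] + (-1) * a (1,{1,4,7}) [3] + (1) * a (1,{1,4,7}) [5] + (-1) * a (4,{1,4,7}) [1] + (-1) * a (4,{1,4,7}) [2] + (1) * a (4,{1,4,7}) [3] + (1) * a (4,{1,4,7}) [4] + (-1) * a (4,{1,4,7}) [5] + (1) * a (7,{1,4,7}) [1] + (-1) * a (7,{1,4,7}) [4]) (a0 4 {1,4,7}) + zsc ((-1) * a (1,{1,4,7}) [3] + (1) * a (1,{1,4,7}) [5] + (1) * a (4,{1,4,7}) [1] + (2) * a (4,{1,4,7}) [3] + (-1) * a (4,{1,4,7}) [7] + (-1) * a (7,{1,4,7}) [1] + (-1) * a (7,{1,4,7}) [3] + (-1) * a (7,{1,4,7}) [5] + (1) * a (7,{1,4,7}) [7]) (a0 7 {1,4,7}) + zsc ((1) * a (7,{1,4,7}) [1]) (a1 1 {1,4,7}) + zsc ((1) * a (1,{1,4,7}) [2]) (a1 2 {1,4,7}) + zsc ((1) * a (4,{1,4,7}) [3]) (a1 3 {1,4,7}) + zsc ((1) * a (7,{1,4,7})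 [4]) (a1 4 {1,4,7}) + zsc ((-1) * a (1,{1,4,7}) [3] + (1) * a (1,{1,4,7}) [5] + (1) * a (4,{1,4,7}) [3]) (a1 5 {1,4,7}) + zsc ((1) * a (4,{1,4,7}) [3] + (-1) * a (7,{1,4,7}) [3] + (1) * a (7,{1,4,7}) [6]) (a1 6 {1,4,7}) + zsc ((-1) * a (4,{1,4,7}) [1] + (1) * a (4,{1,4,7}) [7] + (1) * a (7,{1,4,7}) [1]) (a1 7 {1,4,7}) + zsc ((1) * a (1,{1,4,7}) [3] + (-1) * a (4,{1,4,7}) [3]) (a2 1 {1,4,7} {1,3,5}) + zsc ((1) * a (1,{1,4,7}) [7] + (1) * a (4,{1,4,7}) [1] + (-1) * a (4,{1,4,7}) [7] + (-1) * a (7,{1,4,7}) [1]) (a2 1 {1,4,7} {1,4,7}) + zsc ((1) * a (1,{1,4,7}) [6] + (-1) * a (4,{1,4,7}) [3] + (1) * a (7,{1,4,7}) [3] + (-1) * a (7,{1,4,7}) [6]) (a2 1 {1,4,7} {1,6}) + zsc ((1) * a (4,{1,4,7}) [1] + (-1) * a (7,{1,4,7}) [1]) (a2 4 {1,4,7} {1,4,7}) + zsc ((-1) * a (1,{1,4,7}) [2] + (1) * a (4,{1,4,7}) [2]) (a2 4 {1,4,7} {2,4,6}) + zsc ((1) * a (1,{1,4,7}) [3] + (-1) * a (1,{1,4,7}) [5] + (-1) * a (4,{1,4,7}) [3] + (1) * a (4,{1,4,7}) [5]) (a2 4 {1,4,7} {4,5}) + zsc ((1) * a (1,{1,4,7})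 [3] + (-1) * a (1,{1,4,7}) [5] + (-1) * a (4,{1,4,7}) [3] + (1) * a (7,{1,4,7}) [5]) (a2 7 {1,4,7} {2,5,7}) + zsc ((-1) * a (4,{1,4,7}) [3] + (1) * a (7,{1,4,7}) [3]) (a2 7 {1,4,7} {3,6,7})"
  have bg: "blkgen {1,4,7} F" unfolding F_def
    by (intro blkgen_add blkgen_zsc blkgen_a0 blkgen_a1 blkgen_a2) (simp_all add: P0_mems[simplified])
  have inU: "F \<in> zspan Ugens" unfolding F_def
    by (intro zspan_add zspan_zsc a0_in a1_in a2_in) (simp_all add: P0_mems[simplified])
  have "blk {1,4,7} a = F"
  proof (rule blk_eqI[OF a bg])
    fix j m :: nat assume jm: "j \<in> {1,4,7}" "m \<in> {1..7}"
    then have "j = 1 \<or> j = 4 \<or> j = 7" "m = 1 \<or> m = 2 \<or> m = 3 \<or> m = 4 \<or> m = 5 \<or> m = 6 \<or> m = 7" by auto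
    then show "a (j,{1,4,7}) [m] = F (j,{1,4,7}) [m]"
      unfolding F_def
      by (elim disjE; simp add: zsc_apply a0_apply a1_apply a2_apply Aidx_I P0_mems[simplified]; use e0[simplified] e1[simplified] e2[simplified] in linarith)
  qed
  then show ?thesis using inU by simp
qed

lemma blk_16: assumes a: "a \<in> Agrp"
    and e0: "(1) * a (1,{1,6}) [2] + (-1) * a (1,{1,6}) [3] + (-1) * a (1,{1,6}) [4] + (1) * a (1,{1,6}) [5] + (1) * a (1,{1,6}) [7] + (-1) * a (6,{1,6}) [2] + (1) * a (6,{1,6}) [3] + (1) * a (6,{1,6}) [4] + (-1) * a (6,{1,6}) [5] + (-1) * a (6,{1,6}) [7] = 0"
  shows "blk {1,6} a \<in> zspan Ugens"
proof -
  define F where "F = zsc ((1) * a (1,{1,6}) [1] + (1) * a (1,{1,6}) [2] + (-1) * a (1,{1,6}) [4] + (-1) * a (1,{1,6}) [5] + (-1) * a (6,{1,6}) [1] + (-1) * a (6,{1,6}) [2] + (1) * a (6,{1,6}) [4] + (1) * a (6,{1,6}) [5]) (a0 1 {1,6}) + zsc ((1) * a (1,{1,6}) [2] + (1) * a (1,{1,6}) [3] + (-1) * a (1,{1,6}) [5] + (-1) * a (1,{1,6}) [6] + (-1) * a (6,{1,6}) [2] + (-1) * a (6,{1,6}) [3] + (1) * a (6,{1,6}) [5] + (1) * a (6,{1,6}) [6]) (a0 6 {1,6}) + zsc ((1) * a (6,{1,6}) [1]) (a1 1 {1,6}) + zsc ((1) * a (1,{1,6}) [2]) (a1 2 {1,6})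 + zsc ((1) * a (1,{1,6}) [3] + (-1) * a (1,{1,6}) [5] + (1) * a (6,{1,6}) [5]) (a1 3 {1,6}) + zsc ((1) * a (1,{1,6}) [2] + (-1) * a (6,{1,6}) [2] + (1) * a (6,{1,6}) [4]) (a1 4 {1,6}) + zsc ((1) * a (6,{1,6}) [5]) (a1 5 {1,6}) + zsc ((1) * a (1,{1,6}) [6]) (a1 6 {1,6}) + zsc ((1) * a (1,{1,6}) [3] + (-1) * a (1,{1,6}) [5] + (-1) * a (6,{1,6}) [3] + (1) * a (6,{1,6}) [5] + (1) * a (6,{1,6}) [7]) (a1 7 {1,6}) + zsc ((1) * a (1,{1,6}) [5] + (-1) * a (6,{1,6}) [5]) (a2 1 {1,6} {1,3,5}) + zsc ((-1) * a (1,{1,6}) [2] + (1) * a (1,{1,6}) [4] + (1) * a (6,{1,6}) [2] + (-1) * a (6,{1,6}) [4]) (a2 1 {1,6} {1,4,7}) + zsc ((-1) * a (1,{1,6}) [2] + (1) * a (6,{1,6}) [2]) (a2 6 {1,6} {2,4,6}) + zsc ((-1) * a (1,{1,6}) [3] + (1) * a (1,{1,6}) [5] + (1) * a (6,{1,6}) [3] + (-1) * a (6,{1,6}) [5]) (a2 6 {1,6} {3,6,7})"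
  have bg: "blkgen {1,6} F" unfolding F_def
    by (intro blkgen_add blkgen_zsc blkgen_a0 blkgen_a1 blkgen_a2) (simp_all add: P0_mems[simplified])
  have inU: "F \<in> zspan Ugens" unfolding F_def
    by (intro zspan_add zspan_zsc a0_in a1_in a2_in) (simp_all add: P0_mems[simplified])
  have "blk {1,6} a = F"
  proof (rule blk_eqI[OF a bg])
    fix j m :: nat assume jm: "j \<in> {1,6}" "m \<in> {1..7}"
    then have "j = 1 \<or> j = 6" "m = 1 \<or> m = 2 \<or> m = 3 \<or> m = 4 \<or> m = 5 \<or> m = 6 \<or> m = 7" by auto
    then show "a (j,{1,6}) [m] = F (j,{1,6}) [m]"
      unfolding F_def
      by (elim disjE; simp add: zsc_apply a0_apply a1_apply a2_apply Aidx_I P0_mems[simplified]; use e0[simplified] in linarith)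
  qed
  then show ?thesis using inU by simp
qed

lemma blk_23: assumes a: "a \<in> Agrp"
    and e0: "(1) * a (2,{2,3}) [1] + (1) * a (2,{2,3}) [4] + (-1) * a (2,{2,3}) [5] + (-1) * a (2,{2,3}) [6] + (1) * a (2,{2,3}) [7] + (-1) * a (3,{2,3}) [1] + (-1) * a (3,{2,3}) [4] + (1) * a (3,{2,3}) [5] + (1) * a (3,{2,3}) [6] + (-1) * a (3,{2,3}) [7] = 0"
  shows "blk {2,3} a \<in> zspan Ugens"
proof -
  define F where "F = zsc ((1) * a (2,{2,3}) [2] + (-2) * a (2,{2,3}) [4] + (1) * a (2,{2,3}) [6] + (-1) * a (2,{2,3}) [7] + (-1) * a (3,{2,3}) [2] + (2) * a (3,{2,3}) [4] + (-1) * a (3,{2,3}) [6] + (1) * a (3,{2,3}) [7]) (a0 2 {2,3}) + zsc ((-1) * a (2,{2,3}) [3] + (-2) * a (2,{2,3}) [4] + (1) * a (2,{2,3}) [5] + (2) * a (2,{2,3}) [6] + (-1) * a (2,{2,3}) [7] + (1) * a (3,{2,3}) [3] + (2) * a (3,{2,3}) [4] + (-1) * a (3,{2,3}) [5] + (-2) * a (3,{2,3}) [6] + (1) * a (3,{2,3}) [7]) (a0 3 {2,3}) + zsc ((-1) * a (2,{2,3}) [4] + (1) * a (2,{2,3}) [5] + (1) * a (2,{2,3}) [6] + (-1) * a (2,{2,3}) [7] + (1) * a (3,{2,3}) [1] + (1) * a (3,{2,3}) [4] + (-1) * a (3,{2,3}) [5] + (-1) * a (3,{2,3}) [6] + (1)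 * a (3,{2,3}) [7]) (a1 1 {2,3}) + zsc ((1) * a (3,{2,3}) [2]) (a1 2 {2,3}) + zsc ((1) * a (2,{2,3}) [3]) (a1 3 {2,3}) + zsc ((1) * a (3,{2,3}) [4]) (a1 4 {2,3}) + zsc ((-1) * a (2,{2,3}) [4] + (1) * a (2,{2,3}) [5] + (1) * a (2,{2,3}) [6] + (-1) * a (2,{2,3}) [7] + (1) * a (3,{2,3}) [4] + (-1) * a (3,{2,3}) [6] + (1) * a (3,{2,3}) [7]) (a1 5 {2,3}) + zsc ((-1) * a (2,{2,3}) [4] + (1) * a (2,{2,3}) [6] + (1) * a (3,{2,3}) [4]) (a1 6 {2,3}) + zsc ((-1) * a (2,{2,3}) [4] + (1) * a (2,{2,3}) [6] + (1) * a (3,{2,3}) [4] + (-1) * a (3,{2,3}) [6] + (1) * a (3,{2,3}) [7]) (a1 7 {2,3}) + zsc ((1) * a (2,{2,3}) [4] + (-1) * a (3,{2,3}) [4]) (a2 2 {2,3} {2,4,6}) + zsc ((1) * a (2,{2,3}) [4] + (-1) * a (2,{2,3}) [6] + (1) * a (2,{2,3}) [7] + (-1) * a (3,{2,3}) [4] + (1) * a (3,{2,3}) [6] + (-1) * a (3,{2,3}) [7]) (a2 2 {2,3} {2,5,7}) + zsc ((1) * a (2,{2,3}) [4] + (-1) * a (2,{2,3}) [5] + (-1) * a (2,{2,3}) [6] + (1) * a (2,{2,3}) [7] + (-1) * a (3,{2,3}) [4] + (1) * a (3,{2,3}) [5] + (1) * a (3,{2,3}) [6] + (-1) * a (3,{2,3})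 [7]) (a2 3 {2,3} {1,3,5}) + zsc ((1) * a (2,{2,3}) [4] + (-1) * a (2,{2,3}) [6] + (-1) * a (3,{2,3}) [4] + (1) * a (3,{2,3}) [6]) (a2 3 {2,3} {3,6,7})"
  have bg: "blkgen {2,3} F" unfolding F_def
    by (intro blkgen_add blkgen_zsc blkgen_a0 blkgen_a1 blkgen_a2) (simp_all add: P0_mems[simplified])
  have inU: "F \<in> zspan Ugens" unfolding F_def
    by (intro zspan_add zspan_zsc a0_in a1_in a2_in) (simp_all add: P0_mems[simplified])
  have "blk {2,3} a = F"
  proof (rule blk_eqI[OF a bg])
    fix j m :: nat assume jm: "j \<in> {2,3}" "m \<in> {1..7}"
    then have "j = 2 \<or> j = 3" "m = 1 \<or> m = 2 \<or> m = 3 \<or> m = 4 \<or> m = 5 \<or> m = 6 \<or> m = 7" by auto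
    then show "a (j,{2,3}) [m] = F (j,{2,3}) [m]"
      unfolding F_def
      by (elim disjE; simp add: zsc_apply a0_apply a1_apply a2_apply Aidx_I P0_mems[simplified]; use e0[simplified] in linarith)
  qed
  then show ?thesis using inU by simp
qed

lemma blk_246: assumes a: "a \<in> Agrp"
    and e0: "(1) * a (2,{2,4,6}) [1] + (-1) * a (4,{2,4,6}) [1] + (-1) * a (4,{2,4,6}) [3] + (1) * a (4,{2,4,6}) [7] + (1) * a (6,{2,4,6}) [3] + (-1) * a (6,{2,4,6}) [7] = 0"
    and e1: "(2) * a (2,{2,4,6}) [4] + (-2) * a (2,{2,4,6}) [6] + (-2) * a (4,{2,4,6}) [2] + (2) * a (4,{2,4,6}) [6] + (2) * a (6,{2,4,6}) [2] + (-2) * a (6,{2,4,6}) [4] = 0"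
    and e2: "(1) * a (2,{2,4,6}) [5] + (-1) * a (2,{2,4,6}) [7] + (1) * a (4,{2,4,6}) [3] + (-1) * a (6,{2,4,6}) [3] + (-1) * a (6,{2,4,6}) [5] + (1) * a (6,{2,4,6}) [7] = 0"
  shows "blk {2,4,6} a \<in> zspan Ugens"
proof -
  define F where "F = zsc ((1) * a (2,{2,4,6}) [2] + (-1) * a (2,{2,4,6}) [3] + (-1) * a (2,{2,4,6}) [4] + (-1) * a (2,{2,4,6}) [5] + (1) * a (4,{2,4,6}) [3] + (-1) * a (6,{2,4,6}) [2] + (1) * a (6,{2,4,6}) [4] + (1) * a (6,{2,4,6}) [5]) (a0 2 {2,4,6}) + zsc ((-1) * a (2,{2,4,6}) [5] + (1) * a (2,{2,4,6}) [7] + (-1) * a (4,{2,4,6}) [2] + (1) * a (4,{2,4,6}) [4] + (-1) * a (4,{2,4,6}) [5] + (-1) * a (4,{2,4,6}) [7] + (1) * a (6,{2,4,6}) [2] + (-1) * a (6,{2,4,6}) [4] + (2) * a (6,{2,4,6}) [5]) (a0 4 {2,4,6}) + zsc ((1) * a (2,{2,4,6}) [1] + (1) * a (2,{2,4,6}) [4] + (-1) * a (2,{2,4,6}) [6] + (1) * a (4,{2,4,6}) [3] + (-1) * a (6,{2,4,6}) [1] + (-1) * a (6,{2,4,6}) [3] + (-1) * a (6,{2,4,6}) [4] + (1) * a (6,{2,4,6}) [6]) (a0 6 {2,4,6}) + zsc ((1) * a (2,{2,4,6}) [1]) (a1 1 {2,4,6}) + zsc ((1) * a (6,{2,4,6})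 [2]) (a1 2 {2,4,6}) + zsc ((1) * a (4,{2,4,6}) [3]) (a1 3 {2,4,6}) + zsc ((1) * a (6,{2,4,6}) [4]) (a1 4 {2,4,6}) + zsc ((1) * a (6,{2,4,6}) [5]) (a1 5 {2,4,6}) + zsc ((-1) * a (2,{2,4,6}) [4] + (1) * a (2,{2,4,6}) [6] + (1) * a (6,{2,4,6}) [4]) (a1 6 {2,4,6}) + zsc ((-1) * a (2,{2,4,6}) [5] + (1) * a (2,{2,4,6}) [7] + (1) * a (6,{2,4,6}) [5]) (a1 7 {2,4,6}) + zsc ((1) * a (2,{2,4,6}) [3] + (-1) * a (4,{2,4,6}) [3]) (a2 2 {2,4,6} {2,3}) + zsc ((1) * a (2,{2,4,6}) [4] + (-1) * a (6,{2,4,6}) [4]) (a2 2 {2,4,6} {2,4,6}) + zsc ((1) * a (2,{2,4,6}) [5] + (-1) * a (6,{2,4,6}) [5]) (a2 2 {2,4,6} {2,5,7}) + zsc ((1) * a (2,{2,4,6}) [5] + (-1) * a (2,{2,4,6}) [7] + (1) * a (4,{2,4,6}) [7] + (-1) * a (6,{2,4,6}) [5]) (a2 4 {2,4,6} {1,4,7}) + zsc ((1) * a (4,{2,4,6}) [2] + (-1) * a (6,{2,4,6}) [2]) (a2 4 {2,4,6} {2,4,6}) + zsc ((1) * a (4,{2,4,6}) [5] + (-1) * a (6,{2,4,6}) [5]) (a2 4 {2,4,6} {4,5}) + zsc ((-1) * a (2,{2,4,6}) [1] + (1) * a (6,{2,4,6}) [1]) (a2 6 {2,4,6} {1,6}) +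 zsc ((-1) * a (4,{2,4,6}) [3] + (1) * a (6,{2,4,6}) [3]) (a2 6 {2,4,6} {3,6,7})"
  have bg: "blkgen {2,4,6} F" unfolding F_def
    by (intro blkgen_add blkgen_zsc blkgen_a0 blkgen_a1 blkgen_a2) (simp_all add: P0_mems[simplified])
  have inU: "F \<in> zspan Ugens" unfolding F_def
    by (intro zspan_add zspan_zsc a0_in a1_in a2_in) (simp_all add: P0_mems[simplified])
  have "blk {2,4,6} a = F"
  proof (rule blk_eqI[OF a bg])
    fix j m :: nat assume jm: "j \<in> {2,4,6}" "m \<in> {1..7}"
    then have "j = 2 \<or> j = 4 \<or> j = 6" "m = 1 \<or> m = 2 \<or> m = 3 \<or> m = 4 \<or> m = 5 \<or> m = 6 \<or> m = 7" by auto
    then show "a (j,{2,4,6}) [m] = F (j,{2,4,6}) [m]"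
      unfolding F_def
      by (elim disjE; simp add: zsc_apply a0_apply a1_apply a2_apply Aidx_I P0_mems[simplified]; use e0[simplified] e1[simplified] e2[simplified] in linarith)
  qed
  then show ?thesis using inU by simp
qed

lemma blk_257: assumes a: "a \<in> Agrp"
    and e0: "(1) * a (2,{2,5,7}) [1] + (-1) * a (5,{2,5,7}) [1] + (1) * a (5,{2,5,7}) [3] + (-1) * a (5,{2,5,7}) [6] + (-1) * a (7,{2,5,7}) [3] + (1) * a (7,{2,5,7}) [6] = 0"
    and e1: "(1) * a (2,{2,5,7}) [4] + (-1) * a (2,{2,5,7}) [6] + (-1) * a (5,{2,5,7}) [1] + (1) * a (5,{2,5,7}) [3] + (1) * a (7,{2,5,7}) [1] + (-1) * a (7,{2,5,7}) [3] + (-1) * a (7,{2,5,7}) [4] + (1) * a (7,{2,5,7}) [6] = 0"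
    and e2: "(1) * a (2,{2,5,7}) [5] + (-1) * a (2,{2,5,7}) [7] + (-1) * a (5,{2,5,7}) [2] + (1) * a (5,{2,5,7}) [7] + (1) * a (7,{2,5,7}) [2] + (-1) * a (7,{2,5,7}) [5] = 0"
  shows "blk {2,5,7} a \<in> zspan Ugens"
proof -
  define F where "F = zsc ((2) * a (2,{2,5,7}) [1] + (1) * a (2,{2,5,7}) [2] + (-1) * a (2,{2,5,7}) [3] + (-1) * a (2,{2,5,7}) [4] + (-1) * a (2,{2,5,7}) [5] + (-1) * a (5,{2,5,7}) [1] + (1) * a (5,{2,5,7}) [3] + (-1) * a (7,{2,5,7}) [1] + (-1) * a (7,{2,5,7}) [2] + (1) * a (7,{2,5,7}) [4] + (1) * a (7,{2,5,7}) [5]) (a0 2 {2,5,7}) + zsc ((2) * a (2,{2,5,7}) [1] + (-1) * a (5,{2,5,7}) [1] + (-1) * a (5,{2,5,7}) [2] + (-1) * a (5,{2,5,7}) [4] + (1) * a (5,{2,5,7}) [5] + (-1) * a (7,{2,5,7}) [1] + (1) * a (7,{2,5,7}) [2] + (1) * a (7,{2,5,7}) [4] + (-1) * a (7,{2,5,7}) [5]) (a0 5 {2,5,7}) + zsc ((1) * a (2,{2,5,7}) [1] + (1) * a (2,{2,5,7}) [5] + (-1) * a (2,{2,5,7}) [7] + (1) * a (5,{2,5,7}) [6] + (-1) * a (7,{2,5,7}) [1] + (-1) * a (7,{2,5,7}) [5] + (-1) * a (7,{2,5,7}) [6] + (1) * a (7,{2,5,7}) [7]) (a0 7 {2,5,7})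 + zsc ((1) * a (2,{2,5,7}) [1]) (a1 1 {2,5,7}) + zsc ((1) * a (7,{2,5,7}) [2]) (a1 2 {2,5,7}) + zsc ((1) * a (2,{2,5,7}) [1] + (-1) * a (5,{2,5,7}) [1] + (1) * a (5,{2,5,7}) [3]) (a1 3 {2,5,7}) + zsc ((1) * a (2,{2,5,7}) [1] + (-1) * a (7,{2,5,7}) [1] + (1) * a (7,{2,5,7}) [4]) (a1 4 {2,5,7}) + zsc ((1) * a (7,{2,5,7}) [5]) (a1 5 {2,5,7}) + zsc ((1) * a (5,{2,5,7}) [6]) (a1 6 {2,5,7}) + zsc ((-1) * a (2,{2,5,7}) [5] + (1) * a (2,{2,5,7}) [7] + (1) * a (7,{2,5,7}) [5]) (a1 7 {2,5,7}) + zsc ((-1) * a (2,{2,5,7}) [1] + (1) * a (2,{2,5,7}) [3] + (1) * a (5,{2,5,7}) [1] + (-1) * a (5,{2,5,7}) [3]) (a2 2 {2,5,7} {2,3}) + zsc ((-1) * a (2,{2,5,7}) [1] + (1) * a (2,{2,5,7}) [4] + (1) * a (7,{2,5,7}) [1] + (-1) * a (7,{2,5,7}) [4]) (a2 2 {2,5,7} {2,4,6}) + zsc ((1) * a (2,{2,5,7}) [5] + (-1) * a (7,{2,5,7}) [5]) (a2 2 {2,5,7} {2,5,7}) + zsc ((-1) * a (2,{2,5,7}) [1] + (1) * a (5,{2,5,7}) [1]) (a2 5 {2,5,7} {1,3,5}) + zsc ((1) * a (5,{2,5,7}) [2] + (-1) * a (7,{2,5,7}) [2]) (a2 5 {2,5,7}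 {2,5,7}) + zsc ((-1) * a (2,{2,5,7}) [1] + (1) * a (5,{2,5,7}) [4] + (1) * a (7,{2,5,7}) [1] + (-1) * a (7,{2,5,7}) [4]) (a2 5 {2,5,7} {4,5}) + zsc ((-1) * a (2,{2,5,7}) [1] + (1) * a (7,{2,5,7}) [1]) (a2 7 {2,5,7} {1,4,7}) + zsc ((-1) * a (5,{2,5,7}) [6] + (1) * a (7,{2,5,7}) [6]) (a2 7 {2,5,7} {3,6,7})"
  have bg: "blkgen {2,5,7} F" unfolding F_def
    by (intro blkgen_add blkgen_zsc blkgen_a0 blkgen_a1 blkgen_a2) (simp_all add: P0_mems[simplified])
  have inU: "F \<in> zspan Ugens" unfolding F_def
    by (intro zspan_add zspan_zsc a0_in a1_in a2_in) (simp_all add: P0_mems[simplified])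
  have "blk {2,5,7} a = F"
  proof (rule blk_eqI[OF a bg])
    fix j m :: nat assume jm: "j \<in> {2,5,7}" "m \<in> {1..7}"
    then have "j = 2 \<or> j = 5 \<or> j = 7" "m = 1 \<or> m = 2 \<or> m = 3 \<or> m = 4 \<or> m = 5 \<or> m = 6 \<or> m = 7" by auto
    then show "a (j,{2,5,7}) [m] = F (j,{2,5,7}) [m]"
      unfolding F_def
      by (elim disjE; simp add: zsc_apply a0_apply a1_apply a2_apply Aidx_I P0_mems[simplified]; use e0[simplified] e1[simplified] e2[simplified] in linarith)
  qed
  then show ?thesis using inU by simp
qed

lemma blk_367: assumes a: "a \<in> Agrp"
    and e0: "(1) * a (3,{3,6,7}) [1] + (-1) * a (3,{3,6,7}) [5] + (1) * a (6,{3,6,7}) [2] + (-1) * a (6,{3,6,7}) [4] + (-1) * a (7,{3,6,7}) [1] + (-1) * a (7,{3,6,7}) [2] + (1) * a (7,{3,6,7}) [4] + (1) * a (7,{3,6,7}) [5] = 0"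
    and e1: "(1) * a (3,{3,6,7}) [4] + (1) * a (6,{3,6,7}) [2] + (-1) * a (6,{3,6,7}) [4] + (-1) * a (6,{3,6,7}) [5] + (-1) * a (7,{3,6,7}) [2] + (1) * a (7,{3,6,7}) [5] = 0"
    and e2: "(2) * a (3,{3,6,7}) [6] + (-2) * a (3,{3,6,7}) [7] + (-2) * a (6,{3,6,7}) [3] + (2) * a (6,{3,6,7}) [7] + (2) * a (7,{3,6,7}) [3] + (-2) * a (7,{3,6,7}) [6] = 0"
  shows "blk {3,6,7} a \<in> zspan Ugens"
proof -
  define F where "F = zsc ((-1) * a (3,{3,6,7}) [1] + (-1) * a (3,{3,6,7}) [2] + (1) * a (3,{3,6,7}) [3] + (-1) * a (3,{3,6,7}) [7] + (-1) * a (6,{3,6,7}) [2] + (-1) * a (6,{3,6,7}) [3] + (1) * a (6,{3,6,7}) [4] + (2) * a (6,{3,6,7}) [5] + (1) * a (6,{3,6,7}) [7] + (1) * a (7,{3,6,7}) [1] + (2) * a (7,{3,6,7}) [2] + (-1) * a (7,{3,6,7}) [4] + (-2) * a (7,{3,6,7}) [5]) (a0 3 {3,6,7}) + zsc ((-1) * a (3,{3,6,7}) [6] + (1) * a (3,{3,6,7}) [7] + (-1) * a (6,{3,6,7}) [1] + (-2) * a (6,{3,6,7}) [2] + (1) * a (6,{3,6,7}) [4] + (2) * a (6,{3,6,7}) [5] + (1) * a (6,{3,6,7}) [6] + (-1) * a (6,{3,6,7}) [7] + (1) * a (7,{3,6,7}) [1] + (2) * a (7,{3,6,7}) [2] + (-1)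 * a (7,{3,6,7}) [4] + (-2) * a (7,{3,6,7}) [5]) (a0 6 {3,6,7}) + zsc ((-1) * a (6,{3,6,7}) [2] + (1) * a (6,{3,6,7}) [3] + (1) * a (6,{3,6,7}) [4] + (2) * a (6,{3,6,7}) [5] + (-1) * a (6,{3,6,7}) [7] + (1) * a (7,{3,6,7}) [2] + (-1) * a (7,{3,6,7}) [3] + (-1) * a (7,{3,6,7}) [4] + (-2) * a (7,{3,6,7}) [5] + (1) * a (7,{3,6,7}) [7]) (a0 7 {3,6,7}) + zsc ((-1) * a (6,{3,6,7}) [2] + (1) * a (6,{3,6,7}) [4] + (1) * a (6,{3,6,7}) [5] + (1) * a (7,{3,6,7}) [1] + (1) * a (7,{3,6,7}) [2] + (-1) * a (7,{3,6,7}) [4] + (-1) * a (7,{3,6,7}) [5]) (a1 1 {3,6,7}) + zsc ((1) * a (6,{3,6,7}) [5] + (1) * a (7,{3,6,7}) [2] + (-1) * a (7,{3,6,7}) [5]) (a1 2 {3,6,7}) + zsc ((1) * a (7,{3,6,7}) [3]) (a1 3 {3,6,7}) + zsc ((-1) * a (6,{3,6,7}) [2] + (1) * a (6,{3,6,7}) [4] + (1) * a (6,{3,6,7}) [5] + (1) * a (7,{3,6,7}) [2] + (-1) * a (7,{3,6,7}) [5]) (a1 4 {3,6,7}) + zsc ((1) * a (6,{3,6,7}) [5]) (a1 5 {3,6,7}) + zsc ((1) * a (3,{3,6,7}) [6] + (-1) * a (3,{3,6,7}) [7] + (-1) * a (6,{3,6,7}) [3] + (1) * a (6,{3,6,7})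 [7] + (1) * a (7,{3,6,7}) [3]) (a1 6 {3,6,7}) + zsc ((-1) * a (6,{3,6,7}) [3] + (1) * a (6,{3,6,7}) [7] + (1) * a (7,{3,6,7}) [3]) (a1 7 {3,6,7}) + zsc ((1) * a (3,{3,6,7}) [1] + (1) * a (6,{3,6,7}) [2] + (-1) * a (6,{3,6,7}) [4] + (-1) * a (6,{3,6,7}) [5] + (-1) * a (7,{3,6,7}) [1] + (-1) * a (7,{3,6,7}) [2] + (1) * a (7,{3,6,7}) [4] + (1) * a (7,{3,6,7}) [5]) (a2 3 {3,6,7} {1,3,5}) + zsc ((1) * a (3,{3,6,7}) [2] + (-1) * a (6,{3,6,7}) [5] + (-1) * a (7,{3,6,7}) [2] + (1) * a (7,{3,6,7}) [5]) (a2 3 {3,6,7} {2,3}) + zsc ((1) * a (3,{3,6,7}) [7] + (1) * a (6,{3,6,7}) [3] + (-1) * a (6,{3,6,7}) [7] + (-1) * a (7,{3,6,7}) [3]) (a2 3 {3,6,7} {3,6,7}) + zsc ((1) * a (6,{3,6,7}) [1] + (1) * a (6,{3,6,7}) [2] + (-1) * a (6,{3,6,7}) [4] + (-1) * a (6,{3,6,7}) [5] + (-1) * a (7,{3,6,7}) [1] + (-1) * a (7,{3,6,7}) [2] + (1) * a (7,{3,6,7}) [4] + (1) * a (7,{3,6,7}) [5]) (a2 6 {3,6,7} {1,6}) + zsc ((1) * a (6,{3,6,7}) [2] + (-1) * a (6,{3,6,7}) [5] + (-1) * a (7,{3,6,7}) [2] + (1) * a (7,{3,6,7}) [5]) (a2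 6 {3,6,7} {2,4,6}) + zsc ((1) * a (6,{3,6,7}) [3] + (-1) * a (7,{3,6,7}) [3]) (a2 6 {3,6,7} {3,6,7}) + zsc ((1) * a (6,{3,6,7}) [2] + (-1) * a (6,{3,6,7}) [4] + (-1) * a (6,{3,6,7}) [5] + (-1) * a (7,{3,6,7}) [2] + (1) * a (7,{3,6,7}) [4] + (1) * a (7,{3,6,7}) [5]) (a2 7 {3,6,7} {1,4,7}) + zsc ((-1) * a (6,{3,6,7}) [5] + (1) * a (7,{3,6,7}) [5]) (a2 7 {3,6,7} {2,5,7})"
  have bg: "blkgen {3,6,7} F" unfolding F_def
    by (intro blkgen_add blkgen_zsc blkgen_a0 blkgen_a1 blkgen_a2) (simp_all add: P0_mems[simplified])
  have inU: "F \<in> zspan Ugens" unfolding F_def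
    by (intro zspan_add zspan_zsc a0_in a1_in a2_in) (simp_all add: P0_mems[simplified])
  have "blk {3,6,7} a = F"
  proof (rule blk_eqI[OF a bg])
    fix j m :: nat assume jm: "j \<in> {3,6,7}" "m \<in> {1..7}"
    then have "j = 3 \<or> j = 6 \<or> j = 7" "m = 1 \<or> m = 2 \<or> m = 3 \<or> m = 4 \<or> m = 5 \<or> m = 6 \<or> m = 7" by auto
    then show "a (j,{3,6,7}) [m] = F (j,{3,6,7}) [m]"
      unfolding F_def
      by (elim disjE; simp add: zsc_apply a0_apply a1_apply a2_apply Aidx_I P0_mems[simplified]; use e0[simplified] e1[simplified] e2[simplified] in linarith)
  qed
  then show ?thesis using inU by simp
qed

lemma blk_45: assumes a: "a \<in> Agrp"
    and e0: "(1) * a (4,{4,5}) [1] + (1) * a (4,{4,5}) [2] + (-1) * a (4,{4,5}) [3] + (-1) * a (4,{4,5}) [6] + (-1) * a (4,{4,5}) [7] + (-1) * a (5,{4,5}) [1] + (-1) * a (5,{4,5}) [2] + (1) * a (5,{4,5}) [3] + (1) * a (5,{4,5}) [6] + (1) * a (5,{4,5}) [7] = 0"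
  shows "blk {4,5} a \<in> zspan Ugens"
proof -
  define F where "F = zsc ((-2) * a (4,{4,5}) [1] + (-1) * a (4,{4,5}) [2] + (2) * a (4,{4,5}) [3] + (1) * a (4,{4,5}) [4] + (1) * a (4,{4,5}) [7] + (2) * a (5,{4,5}) [1] + (1) * a (5,{4,5}) [2] + (-2) * a (5,{4,5}) [3] + (-1) * a (5,{4,5}) [4] + (-1) * a (5,{4,5}) [7]) (a0 4 {4,5}) + zsc ((-1) * a (4,{4,5}) [1] + (2) * a (4,{4,5}) [3] + (-1) * a (4,{4,5}) [5] + (1) * a (4,{4,5}) [7] + (1) * a (5,{4,5}) [1] + (-2) * a (5,{4,5}) [3] + (1) * a (5,{4,5}) [5] + (-1) * a (5,{4,5}) [7]) (a0 5 {4,5}) + zsc ((1) * a (4,{4,5}) [3] + (1) * a (5,{4,5}) [1] + (-1) * a (5,{4,5}) [3]) (a1 1 {4,5}) + zsc ((-1) * a (4,{4,5}) [1] + (1) * a (4,{4,5}) [3] + (1) * a (4,{4,5}) [7] + (1) * a (5,{4,5}) [1] + (1) * a (5,{4,5}) [2] + (-1) * a (5,{4,5}) [3] + (-1) * a (5,{4,5}) [7]) (a1 2 {4,5}) + zsc ((1) * a (4,{4,5}) [3]) (a1 3 {4,5}) + zsc ((1) * a (5,{4,5}) [4]) (a1 4 {4,5}) + zsc ((1) * a (4,{4,5}) [5]) (a1 5 {4,5}) + zsc ((1) * a (5,{4,5}) [6]) (a1 6 {4,5}) + zsc ((-1) * a (4,{4,5}) [1] + (1) * a (4,{4,5}) [3]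 + (1) * a (4,{4,5}) [7] + (1) * a (5,{4,5}) [1] + (-1) * a (5,{4,5}) [3]) (a1 7 {4,5}) + zsc ((1) * a (4,{4,5}) [1] + (-1) * a (4,{4,5}) [3] + (-1) * a (5,{4,5}) [1] + (1) * a (5,{4,5}) [3]) (a2 4 {4,5} {1,4,7}) + zsc ((1) * a (4,{4,5}) [1] + (1) * a (4,{4,5}) [2] + (-1) * a (4,{4,5}) [3] + (-1) * a (4,{4,5}) [7] + (-1) * a (5,{4,5}) [1] + (-1) * a (5,{4,5}) [2] + (1) * a (5,{4,5}) [3] + (1) * a (5,{4,5}) [7]) (a2 4 {4,5} {2,4,6}) + zsc ((-1) * a (4,{4,5}) [3] + (1) * a (5,{4,5}) [3]) (a2 5 {4,5} {1,3,5}) + zsc ((1) * a (4,{4,5}) [1] + (-1) * a (4,{4,5}) [3] + (-1) * a (4,{4,5}) [7] + (-1) * a (5,{4,5}) [1] + (1) * a (5,{4,5}) [3] + (1) * a (5,{4,5}) [7]) (a2 5 {4,5} {2,5,7})"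
  have bg: "blkgen {4,5} F" unfolding F_def
    by (intro blkgen_add blkgen_zsc blkgen_a0 blkgen_a1 blkgen_a2) (simp_all add: P0_mems[simplified])
  have inU: "F \<in> zspan Ugens" unfolding F_def
    by (intro zspan_add zspan_zsc a0_in a1_in a2_in) (simp_all add: P0_mems[simplified])
  have "blk {4,5} a = F"
  proof (rule blk_eqI[OF a bg])
    fix j m :: nat assume jm: "j \<in> {4,5}" "m \<in> {1..7}"
    then have "j = 4 \<or> j = 5" "m = 1 \<or> m = 2 \<or> m = 3 \<or> m = 4 \<or> m = 5 \<or> m = 6 \<or> m = 7" by auto
    then show "a (j,{4,5}) [m] = F (j,{4,5}) [m]"
      unfolding F_def
      by (elim disjE; simp add: zsc_apply a0_apply a1_apply a2_apply Aidx_I P0_mems[simplified]; use e0[simplified] in linarith)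
  qed
  then show ?thesis using inU by simp
qed


lemma Bidx_I: "p \<in> P0 \<Longrightarrow> i \<in> p \<Longrightarrow> i \<noteq> Min p \<Longrightarrow> (i,p) \<in> Bidx"
  unfolding Bidx_def using Aidx_I by blast

lemma ker_sub_U: "ker_tau \<subseteq> U"
proof
  fix a assume a: "a \<in> ker_tau"
  then have Ag: "a \<in> Agrp" and T: "\<And>i p. (i,p) \<in> Bidx \<Longrightarrow> tau_val a i p \<in> R3"
    unfolding ker_tau_def by auto
  have s: "\<And>ip. sup1 (a ip)" using Agrp_sup1[OF Ag] .
  have B0: "(5,{1,3,5}) \<in> Bidx" by (rule Bidx_I[OF P0_mems(1)]) simp_all
  have Q0: "(1) * a (1,{1,3,5}) [2] + (1) * a (3,{1,3,5}) [6] + (-1) * a (3,{1,3,5}) [7] + (-1) * a (5,{1,3,5}) [2] + (-1) * a (5,{1,3,5}) [6] + (1) * a (5,{1,3,5}) [7] = 0" by (rule E0[OF s T[OF B0]])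
  have B1: "(3,{1,3,5}) \<in> Bidx" by (rule Bidx_I[OF P0_mems(1)]) simp_all
  have Q1: "(2) * a (1,{1,3,5}) [3] + (-2) * a (1,{1,3,5}) [5] + (-2) * a (3,{1,3,5}) [1] + (2) * a (3,{1,3,5}) [5] + (2) * a (5,{1,3,5}) [1] + (-2) * a (5,{1,3,5}) [3] = 0" by (rule E1[OF s T[OF B1]])
  have B2: "(3,{1,3,5}) \<in> Bidx" by (rule Bidx_I[OF P0_mems(1)]) simp_all
  have Q2: "(1) * a (1,{1,3,5}) [4] + (-1) * a (1,{1,3,5}) [7] + (-1) * a (3,{1,3,5}) [4] + (-1) * a (3,{1,3,5}) [6] + (1) * a (3,{1,3,5}) [7] + (1) * a (5,{1,3,5}) [6] = 0" by (rule E2[OF s T[OF B2]])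
  have B3: "(7,{1,4,7}) \<in> Bidx" by (rule Bidx_I[OF P0_mems(2)]) simp_all
  have Q3: "(1) * a (1,{1,4,7}) [2] + (-1) * a (4,{1,4,7}) [2] + (-1) * a (4,{1,4,7}) [3] + (1) * a (4,{1,4,7}) [6] + (1) * a (7,{1,4,7}) [3] + (-1) * a (7,{1,4,7}) [6] = 0" by (rule E3[OF s T[OF B3]])
  have B4: "(7,{1,4,7}) \<in> Bidx" by (rule Bidx_I[OF P0_mems(2)]) simp_all
  have Q4: "(1) * a (1,{1,4,7}) [3] + (-1) * a (1,{1,4,7}) [5] + (1) * a (4,{1,4,7}) [2] + (-1) * a (4,{1,4,7}) [6] + (-1) * a (7,{1,4,7}) [2] + (-1) * a (7,{1,4,7}) [3] + (1) * a (7,{1,4,7}) [5] + (1) * a (7,{1,4,7}) [6] = 0" by (rule E4[OF s T[OF B4]])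
  have B5: "(4,{1,4,7}) \<in> Bidx" by (rule Bidx_I[OF P0_mems(2)]) simp_all
  have Q5: "(2) * a (1,{1,4,7}) [4] + (-2) * a (1,{1,4,7}) [7] + (-2) * a (4,{1,4,7}) [1] + (2) * a (4,{1,4,7}) [7] + (2) * a (7,{1,4,7}) [1] + (-2) * a (7,{1,4,7}) [4] = 0" by (rule E5[OF s T[OF B5]])
  have B6: "(6,{1,6}) \<in> Bidx" by (rule Bidx_I[OF P0_mems(3)]) simp_all
  have Q6: "(1) * a (1,{1,6}) [2] + (-1) * a (1,{1,6}) [3] + (-1) * a (1,{1,6}) [4] + (1) * a (1,{1,6}) [5] + (1) * a (1,{1,6}) [7] + (-1) * a (6,{1,6}) [2] + (1) * a (6,{1,6}) [3] + (1) * a (6,{1,6}) [4] + (-1) * a (6,{1,6}) [5] + (-1) * a (6,{1,6}) [7] = 0" by (rule E6[OF s T[OF B6]])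
  have B7: "(3,{2,3}) \<in> Bidx" by (rule Bidx_I[OF P0_mems(4)]) simp_all
  have Q7: "(1) * a (2,{2,3}) [1] + (1) * a (2,{2,3}) [4] + (-1) * a (2,{2,3}) [5] + (-1) * a (2,{2,3}) [6] + (1) * a (2,{2,3}) [7] + (-1) * a (3,{2,3}) [1] + (-1) * a (3,{2,3}) [4] + (1) * a (3,{2,3}) [5] + (1) * a (3,{2,3}) [6] + (-1) * a (3,{2,3}) [7] = 0" by (rule E7[OF s T[OF B7]])
  have B8: "(4,{2,4,6}) \<in> Bidx" by (rule Bidx_I[OF P0_mems(5)]) simp_all
  have Q8: "(1) * a (2,{2,4,6}) [1] + (-1) * a (4,{2,4,6}) [1] + (-1) * a (4,{2,4,6}) [3] + (1) * a (4,{2,4,6}) [7] + (1) * a (6,{2,4,6}) [3] + (-1) * a (6,{2,4,6}) [7] = 0" by (rule E8[OF s T[OF B8]])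
  have B9: "(4,{2,4,6}) \<in> Bidx" by (rule Bidx_I[OF P0_mems(5)]) simp_all
  have Q9: "(2) * a (2,{2,4,6}) [4] + (-2) * a (2,{2,4,6}) [6] + (-2) * a (4,{2,4,6}) [2] + (2) * a (4,{2,4,6}) [6] + (2) * a (6,{2,4,6}) [2] + (-2) * a (6,{2,4,6}) [4] = 0" by (rule E9[OF s T[OF B9]])
  have B10: "(6,{2,4,6}) \<in> Bidx" by (rule Bidx_I[OF P0_mems(5)]) simp_all
  have Q10: "(1) * a (2,{2,4,6}) [5] + (-1) * a (2,{2,4,6}) [7] + (1) * a (4,{2,4,6}) [3] + (-1) * a (6,{2,4,6}) [3] + (-1) * a (6,{2,4,6}) [5] + (1) * a (6,{2,4,6}) [7] = 0" by (rule E10[OF s T[OF B10]])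
  have B11: "(5,{2,5,7}) \<in> Bidx" by (rule Bidx_I[OF P0_mems(6)]) simp_all
  have Q11: "(1) * a (2,{2,5,7}) [1] + (-1) * a (5,{2,5,7}) [1] + (1) * a (5,{2,5,7}) [3] + (-1) * a (5,{2,5,7}) [6] + (-1) * a (7,{2,5,7}) [3] + (1) * a (7,{2,5,7}) [6] = 0" by (rule E11[OF s T[OF B11]])
  have B12: "(7,{2,5,7}) \<in> Bidx" by (rule Bidx_I[OF P0_mems(6)]) simp_all
  have Q12: "(1) * a (2,{2,5,7}) [4] + (-1) * a (2,{2,5,7}) [6] + (-1) * a (5,{2,5,7}) [1] + (1) * a (5,{2,5,7}) [3] + (1) * a (7,{2,5,7}) [1] + (-1) * a (7,{2,5,7}) [3] + (-1) * a (7,{2,5,7}) [4] + (1) * a (7,{2,5,7}) [6] = 0" by (rule E12[OF s T[OF B12]])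
  have B13: "(5,{2,5,7}) \<in> Bidx" by (rule Bidx_I[OF P0_mems(6)]) simp_all
  have Q13: "(1) * a (2,{2,5,7}) [5] + (-1) * a (2,{2,5,7}) [7] + (-1) * a (5,{2,5,7}) [2] + (1) * a (5,{2,5,7}) [7] + (1) * a (7,{2,5,7}) [2] + (-1) * a (7,{2,5,7}) [5] = 0" by (rule E13[OF s T[OF B13]])
  have B14: "(7,{3,6,7}) \<in> Bidx" by (rule Bidx_I[OF P0_mems(7)]) simp_all
  have Q14: "(1) * a (3,{3,6,7}) [1] + (-1) * a (3,{3,6,7}) [5] + (1) * a (6,{3,6,7}) [2] + (-1) * a (6,{3,6,7}) [4] + (-1) * a (7,{3,6,7}) [1] + (-1) * a (7,{3,6,7}) [2] + (1) * a (7,{3,6,7}) [4] + (1) * a (7,{3,6,7}) [5] = 0" by (rule E14[OF s T[OF B14]])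
  have B15: "(7,{3,6,7}) \<in> Bidx" by (rule Bidx_I[OF P0_mems(7)]) simp_all
  have Q15: "(1) * a (3,{3,6,7}) [4] + (1) * a (6,{3,6,7}) [2] + (-1) * a (6,{3,6,7}) [4] + (-1) * a (6,{3,6,7}) [5] + (-1) * a (7,{3,6,7}) [2] + (1) * a (7,{3,6,7}) [5] = 0" by (rule E15[OF s T[OF B15]])
  have B16: "(6,{3,6,7}) \<in> Bidx" by (rule Bidx_I[OF P0_mems(7)]) simp_all
  have Q16: "(2) * a (3,{3,6,7}) [6] + (-2) * a (3,{3,6,7}) [7] + (-2) * a (6,{3,6,7}) [3] + (2) * a (6,{3,6,7}) [7] + (2) * a (7,{3,6,7}) [3] + (-2) * a (7,{3,6,7}) [6] = 0" by (rule E16[OF s T[OF B16]])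
  have B17: "(5,{4,5}) \<in> Bidx" by (rule Bidx_I[OF P0_mems(8)]) simp_all
  have Q17: "(1) * a (4,{4,5}) [1] + (1) * a (4,{4,5}) [2] + (-1) * a (4,{4,5}) [3] + (-1) * a (4,{4,5}) [6] + (-1) * a (4,{4,5}) [7] + (-1) * a (5,{4,5}) [1] + (-1) * a (5,{4,5}) [2] + (1) * a (5,{4,5}) [3] + (1) * a (5,{4,5}) [6] + (1) * a (5,{4,5}) [7] = 0" by (rule E17[OF s T[OF B17]])
  have blks: "blk p a \<in> zspan Ugens" if p: "p \<in> P0" for p
    using P0_cases[OF p]
  proof (elim disjE)
    assume "p = {1,3,5}" then show ?thesis using blk_135[OF Ag Q0 Q1 Q2] by simp
  next
    assume "p = {1,4,7}" then show ?thesis using blk_147[OF Ag Q3 Q4 Q5] by simp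
  next
    assume "p = {1,6}" then show ?thesis using blk_16[OF Ag Q6] by simp
  next
    assume "p = {2,3}" then show ?thesis using blk_23[OF Ag Q7] by simp
  next
    assume "p = {2,4,6}" then show ?thesis using blk_246[OF Ag Q8 Q9 Q10] by simp
  next
    assume "p = {2,5,7}" then show ?thesis using blk_257[OF Ag Q11 Q12 Q13] by simp
  next
    assume "p = {3,6,7}" then show ?thesis using blk_367[OF Ag Q14 Q15 Q16] by simp
  next
    assume "p = {4,5}" then show ?thesis using blk_45[OF Ag Q17] by simp
  qed
  have "a = (\<Sum>p\<in>P0. blk p a)" by (rule blk_sum[OF Ag])
  also have "\<dots> \<in> zspan Ugens"
    by (rule zspan_sum[OF _ blks]) (simp add: P0_eq)
  finally show "a \<in> U" unfolding U_Ugens .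
qed

theorem lemma3p3:
  shows "U = ker_tau"
  using U_sub_ker ker_sub_U by (rule equalityI)

end
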